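(* (i) Suppose that the $\Psi_i$ satisfy (C1) and (C3), and there is some nonzero $\rho\in L$ for which (C2) holds. Then the $\lambda_t$ and the $\Psi_i$ form an $A$-scaffold of tolerance $\mathfrak{T}=1$ on $L$, with shift parameters $b_1,\ldots,b_n$. Moreover $\mathfrak{a}(v_L(\rho))=p^n-1$. (ii) If, furthermore, (C4) holds and $A$ is commutative, then the $\lambda_t$ may be chosen so that the $A$-scaffold has tolerance $\infty$. (iii) Conversely, if the $\lambda_t$ and the $\Psi_i$ form an $A$-scaffold of some tolerance $\mathfrak{T}\geq 1$, then (C1) and (C3) hold, and (C2) holds for any $\rho\in L$ with $\mathfrak{a}(v_L(\rho))=p^n-1$.
   Context: Let $K$ be a local field whose residue field has characteristic $p>0$, let $L/K$ be a totally ramified extension of degree $p^n$, with normalized valuations $v_K,v_L$ ($v_L(L^\times)=\mathbb{Z}$), and let $A$ be a $K$-algebra of dimension $p^n$ acting $K$-linearly on $L$. Let $\mathbb{S}_{p^n}=\{0,\ldots,p^n-1\}$, write $s=\sum_{i=1}^n s_{(n-i)}p^{n-i}$ with digits $s_{(n-i)}\in\{0,\ldots,p-1\}$, and write $s\preceq t$ if $s_{(n-i)}\le t_{(n-i)}$ for all $i$. Let $b_1,\ldots,b_n$ be integers prime to $p$ (shift parameters), let $\mathfrak{b}(s)=\sum_{i=1}^n s_{(n-i)}p^{n-i}b_i$, and let $\mathfrak{a}:\mathbb{Z}\to\mathbb{S}_{p^n}$ be defined by $\mathfrak{a}(t)\in\mathbb{S}_{p^n}$, $\mathfrak{b}(\mathfrak{a}(t))\equiv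 -t \bmod p^n$ (well defined since $s\mapsto \mathfrak{b}(s)\bmod p^n$ is a bijection of $\mathbb{S}_{p^n}$). Let $\Psi_1,\ldots,\Psi_n\in A$, and for $s\in\mathbb{S}_{p^n}$ let $\Upsilon^{(s)}$ be the set of monomials in the (not necessarily commuting) $\Psi_i$ in which the exponents of $\Psi_i$ sum to $s_{(n-i)}$ for each $i$. Consider the conditions: (C1) $\Psi_i\cdot 1=0$ for each $i$; (C2) $v_L(\Psi\cdot\rho)=v_L(\rho)+\mathfrak{b}(s)$ for all $\Psi\in\Upsilon^{(s)}$ and all $s\in\mathbb{S}_{p^n}$, for a given $\rho\in L\setminus\{0\}$; (C3) $v_L(\Psi_i^p\cdot\alpha)>v_L(\alpha)+b_ip^{n-i+1}$ for all $i$ and all $\alpha\in L\setminus\{0\}$; (C4) $\Psi_i^p=0$ for all $i$. Let $\{\lambda_t\}_{t\in\mathbb{Z}}$ be elements of $L$ with $v_L(\lambda_t)=t$ and $\lambda_{t_1}\lambda_{t_2}^{-1}\in K$ whenever $t_1\equiv t_2\bmod p^n$. An $A$-scaffold on $L$ of tolerance $\mathfrak{T}\ge1$ with shift parameters $b_1,\ldots,b_n$ consists of such $\lambda_t$ together with $\Psi_i\in A$ satisfying $\Psi_i\cdot1=0$ and, for each $i$ and $t$, there is a unit $u_{i,t}\in\mathfrak{O}_K^\times$ with $\Psi_i\cdot\lambda_t\equiv u_{i,t}\lambda_{t+p^{n-i}b_i}$ if $\mathfrak{a}(t)_{(n-i)}\ge1$ and $\Psi_i\cdot\lambda_t\equiv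 0$ if $\mathfrak{a}(t)_{(n-i)}=0$, modulo $\lambda_{t+p^{n-i}b_i}\mathfrak{P}_L^{\mathfrak{T}}$ (with $\mathfrak{P}_L$ the maximal ideal of the valuation ring of $L$); tolerance $\infty$ means these congruences are equalities. *)

theory Defs
  imports Main "HOL-Library.Extended_Nat" "HOL-Computational_Algebra.Primes"
begin

text \<open>L is the whole type 'l (a field); K is a subfield given as a subset.
  v is the normalized valuation v_L on L, only meaningful on nonzero elements;
  the convention v_L(0) = infinity is encoded via vge below.\<close>

definition vge :: "('l::field \<Rightarrow> int) \<Rightarrow> 'l \<Rightarrow> int \<Rightarrow> bool" where
  "vge v x m \<longleftrightarrow> x = 0 \<or> m \<le> v x"

definition normalized_valuation :: "('l::field \<Rightarrow> int) \<Rightarrow> bool" where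
  "normalized_valuation v \<longleftrightarrow>
     (\<forall>x y. x \<noteq> 0 \<longrightarrow> y \<noteq> 0 \<longrightarrow> v (x * y) = v x + v y) \<and>
     (\<forall>x y. x \<noteq> 0 \<longrightarrow> y \<noteq> 0 \<longrightarrow> x + y \<noteq> 0 \<longrightarrow> min (v x) (v y) \<le> v (x + y)) \<and>
     (\<forall>m. \<exists>x. x \<noteq> 0 \<and> v x = m)"

definition is_subfield :: "'l::field set \<Rightarrow> bool" where
  "is_subfield K \<longleftrightarrow> 0 \<in> K \<and> 1 \<in> K \<and>
     (\<forall>x\<in>K. \<forall>y\<in>K. x + y \<in> K \<and> x * y \<in> K) \<and>
     (\<forall>x\<in>K. - x \<in> K \<and> (x \<noteq> 0 \<longrightarrow> inverse x \<in> K))"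

definition complete_wrt :: "('l::field \<Rightarrow> int) \<Rightarrow> 'l set \<Rightarrow> bool" where
  "complete_wrt v K \<longleftrightarrow>
     (\<forall>X :: nat \<Rightarrow> 'l. (\<forall>k. X k \<in> K) \<longrightarrow>
        (\<forall>M. \<exists>N. \<forall>i\<ge>N. \<forall>j\<ge>N. vge v (X i - X j) M) \<longrightarrow>
        (\<exists>c\<in>K. \<forall>M. \<exists>N. \<forall>i\<ge>N. vge v (X i - c) M))"

definition val_ring :: "('l::field \<Rightarrow> int) \<Rightarrow> 'l set \<Rightarrow> 'l set" where
  "val_ring v K = {x \<in> K. vge v x 0}"

definition residue_classes :: "('l::field \<Rightarrow> int) \<Rightarrow> 'l set \<Rightarrow> 'l set set" where
  "residue_classes v K = (\<lambda>x. {y \<in> val_ring v K. vge v (y - x) 1}) ` val_ring v K"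

definition has_K_basis :: "'l::field set \<Rightarrow> nat \<Rightarrow> bool" where
  "has_K_basis K N \<longleftrightarrow> (\<exists>e :: nat \<Rightarrow> 'l.
     (\<forall>x. \<exists>c. (\<forall>j<N. c j \<in> K) \<and> x = (\<Sum>j<N. c j * e j)) \<and>
     (\<forall>c. (\<forall>j<N. c j \<in> K) \<longrightarrow> (\<Sum>j<N. c j * e j) = 0 \<longrightarrow> (\<forall>j<N. c j = 0)))"

text \<open>K is a local field with residue characteristic p (finite residue field of
  characteristic p, complete discretely valued), and L/K is totally ramified of
  degree p^n: [L:K] = p^n and v_L(K^x) = p^n Z.\<close>
definition totally_ramified_local :: "('l::field \<Rightarrow> int) \<Rightarrow> 'l set \<Rightarrow> nat \<Rightarrow> nat \<Rightarrow> bool" where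
  "totally_ramified_local v K p n \<longleftrightarrow>
     normalized_valuation v \<and> is_subfield K \<and> complete_wrt v K \<and>
     prime p \<and> finite (residue_classes v K) \<and> vge v (of_nat p) 1 \<and>
     v ` (K - {0}) = {int (p ^ n) * m | m. True} \<and>
     has_K_basis K (p ^ n)"

text \<open>A is the whole type 'a (a ring with 1); iota is the structure map K \<rightarrow> A;
  act is the action of A on L.\<close>
definition K_algebra_acting ::
  "'l::field set \<Rightarrow> ('l \<Rightarrow> 'a::ring_1) \<Rightarrow> ('a \<Rightarrow> 'l \<Rightarrow> 'l) \<Rightarrow> nat \<Rightarrow> bool" where
  "K_algebra_acting K \<iota> act N \<longleftrightarrow>
     (\<forall>x\<in>K. \<forall>y\<in>K. \<iota> (x + y) = \<iota> x + \<iota> y \<and> \<iota> (x * y) = \<iota> x * \<iota> y) \<and>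
     \<iota> 1 = 1 \<and>
     (\<forall>x\<in>K. \<forall>a. \<iota> x * a = a * \<iota> x) \<and>
     (\<exists>e :: nat \<Rightarrow> 'a.
        (\<forall>a. \<exists>c. (\<forall>j<N. c j \<in> K) \<and> a = (\<Sum>j<N. \<iota> (c j) * e j)) \<and>
        (\<forall>c. (\<forall>j<N. c j \<in> K) \<longrightarrow> (\<Sum>j<N. \<iota> (c j) * e j) = 0 \<longrightarrow> (\<forall>j<N. c j = 0))) \<and>
     (\<forall>a b z. act (a + b) z = act a z + act b z) \<and>
     (\<forall>a z w. act a (z + w) = act a z + act a w) \<and>
     (\<forall>a b z. act (a * b) z = act a (act b z)) \<and>
     (\<forall>z. act 1 z = z) \<and>
     (\<forall>k\<in>K. \<forall>z. act (\<iota> k) z = k * z) \<and>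
     (\<forall>k\<in>K. \<forall>a z. act a (k * z) = k * act a z)"

definition digit :: "nat \<Rightarrow> nat \<Rightarrow> nat \<Rightarrow> nat" where
  "digit p s j = (s div p ^ j) mod p"

definition bfun :: "nat \<Rightarrow> nat \<Rightarrow> (nat \<Rightarrow> int) \<Rightarrow> nat \<Rightarrow> int" where
  "bfun p n b s = (\<Sum>i\<in>{1..n}. int (digit p s (n - i)) * int (p ^ (n - i)) * b i)"

definition afun :: "nat \<Rightarrow> nat \<Rightarrow> (nat \<Rightarrow> int) \<Rightarrow> int \<Rightarrow> nat" where
  "afun p n b t = (THE s. s < p ^ n \<and> bfun p n b s mod int (p ^ n) = (- t) mod int (p ^ n))"

definition Upsilon :: "nat \<Rightarrow> nat \<Rightarrow> (nat \<Rightarrow> 'a::ring_1) \<Rightarrow> nat \<Rightarrow> 'a set" where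
  "Upsilon p n \<Psi> s = {prod_list (map \<Psi> w) | w. set w \<subseteq> {1..n} \<and>
       (\<forall>i\<in>{1..n}. count_list w i = digit p s (n - i))}"

definition C1 :: "nat \<Rightarrow> ('a::ring_1 \<Rightarrow> 'l::field \<Rightarrow> 'l) \<Rightarrow> (nat \<Rightarrow> 'a) \<Rightarrow> bool" where
  "C1 n act \<Psi> \<longleftrightarrow> (\<forall>i\<in>{1..n}. act (\<Psi> i) 1 = 0)"

definition C2 :: "('l::field \<Rightarrow> int) \<Rightarrow> nat \<Rightarrow> nat \<Rightarrow> (nat \<Rightarrow> int) \<Rightarrow>
    ('a::ring_1 \<Rightarrow> 'l \<Rightarrow> 'l) \<Rightarrow> (nat \<Rightarrow> 'a) \<Rightarrow> 'l \<Rightarrow> bool" where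
  "C2 v p n b act \<Psi> \<rho> \<longleftrightarrow> (\<forall>s < p ^ n. \<forall>\<Phi> \<in> Upsilon p n \<Psi> s.
       act \<Phi> \<rho> \<noteq> 0 \<and> v (act \<Phi> \<rho>) = v \<rho> + bfun p n b s)"

definition C3 :: "('l::field \<Rightarrow> int) \<Rightarrow> nat \<Rightarrow> nat \<Rightarrow> (nat \<Rightarrow> int) \<Rightarrow>
    ('a::ring_1 \<Rightarrow> 'l \<Rightarrow> 'l) \<Rightarrow> (nat \<Rightarrow> 'a) \<Rightarrow> bool" where
  "C3 v p n b act \<Psi> \<longleftrightarrow> (\<forall>i\<in>{1..n}. \<forall>\<alpha>. \<alpha> \<noteq> 0 \<longrightarrow>
       vge v (act (\<Psi> i ^ p) \<alpha>) (v \<alpha> + b i * int (p ^ (n - i + 1)) + 1))"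

definition C4 :: "nat \<Rightarrow> nat \<Rightarrow> (nat \<Rightarrow> 'a::ring_1) \<Rightarrow> bool" where
  "C4 p n \<Psi> \<longleftrightarrow> (\<forall>i\<in>{1..n}. \<Psi> i ^ p = 0)"

definition lambda_family :: "('l::field \<Rightarrow> int) \<Rightarrow> 'l set \<Rightarrow> nat \<Rightarrow> nat \<Rightarrow> (int \<Rightarrow> 'l) \<Rightarrow> bool" where
  "lambda_family v K p n lam \<longleftrightarrow> (\<forall>t. lam t \<noteq> 0 \<and> v (lam t) = t) \<and>
     (\<forall>t1 t2. t1 mod int (p ^ n) = t2 mod int (p ^ n) \<longrightarrow> lam t1 * inverse (lam t2) \<in> K)"

text \<open>x = y modulo lambda_s P_L^T (T finite), where v_L(lambda_s) = s; for T = infinity,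
  equality.\<close>
definition cong_tol :: "('l::field \<Rightarrow> int) \<Rightarrow> 'l \<Rightarrow> 'l \<Rightarrow> int \<Rightarrow> enat \<Rightarrow> bool" where
  "cong_tol v x y s T = (case T of \<infinity> \<Rightarrow> x = y | enat m \<Rightarrow> vge v (x - y) (s + int m))"

definition scaffold :: "('l::field \<Rightarrow> int) \<Rightarrow> 'l set \<Rightarrow> ('a::ring_1 \<Rightarrow> 'l \<Rightarrow> 'l) \<Rightarrow>
    nat \<Rightarrow> nat \<Rightarrow> (nat \<Rightarrow> int) \<Rightarrow> (nat \<Rightarrow> 'a) \<Rightarrow> (int \<Rightarrow> 'l) \<Rightarrow> enat \<Rightarrow> bool" where
  "scaffold v K act p n b \<Psi> lam T \<longleftrightarrow> 1 \<le> T \<and> lambda_family v K p n lam \<and>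
     (\<forall>i\<in>{1..n}. act (\<Psi> i) 1 = 0) \<and>
     (\<forall>i\<in>{1..n}. \<forall>t. (let s = t + int (p ^ (n - i)) * b i in
        (if 1 \<le> digit p (afun p n b t) (n - i)
         then (\<exists>u\<in>K. u \<noteq> 0 \<and> v u = 0 \<and> cong_tol v (act (\<Psi> i) (lam t)) (u * lam s) s T)
         else cong_tol v (act (\<Psi> i) (lam t)) 0 s T)))"

end

theory Submission
  imports Defs "HOL-Algebra.Embedded_Algebras"
begin


definition Rl :: "'l::field ring" where
  "Rl = \<lparr>carrier = UNIV, monoid.mult = (*), one = 1, ring.zero = 0, add = (+)\<rparr>"

lemma Rl_simps[simp]: "carrier Rl = UNIV" "monoid.mult Rl = (*)" "one Rl = 1" "zero Rl = 0" "add Rl = (+)"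
  by (simp_all add: Rl_def)

lemma field_Rl: "field (Rl :: 'l::field ring)"
proof -
  have "\<exists>y. x + y = 0" for x :: 'l
    using add.right_inverse by blast
  moreover have "x \<noteq> 0 \<Longrightarrow> \<exists>y. x * y = 1" for x :: 'l
    by (rule exI[of _ "inverse x"]) auto
  ultimately show ?thesis
    unfolding Rl_def using add.right_inverse
    by unfold_locales (auto simp:algebra_simps Units_def)
qed

lemma subfield_Rl:
  assumes "is_subfield (K :: 'l::field set)"
  shows "subfield K Rl"
proof -
  interpret R: field Rl by (rule field_Rl)
  have "field (Rl\<lparr>carrier := K\<rparr>)"
  proof -
    have z: "0 \<in> K" "1 \<in> K" and cl: "\<And>x y. x \<in> K \<Longrightarrow> y \<in> K \<Longrightarrow> x + y \<in> K \<and> x * y \<in> K"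
      and neg: "\<And>x. x \<in> K \<Longrightarrow> - x \<in> K" and inv: "\<And>x. x \<in> K \<Longrightarrow> x \<noteq> 0 \<Longrightarrow> inverse x \<in> K"
      using assms unfolding is_subfield_def by auto
    have a: "\<And>x. x \<in> K \<Longrightarrow> \<exists>y\<in>K. x + y = 0" using neg by force
    have b: "\<And>x. x \<in> K \<Longrightarrow> x \<noteq> 0 \<Longrightarrow> \<exists>y\<in>K. x * y = 1" using inv by force
    show ?thesis
      unfolding Rl_def using z cl a b
      by unfold_locales (auto simp:algebra_simps Units_def)
  qed
  thus ?thesis using R.subfield_iff(1) by simp
qed

lemma combine_Rl: "length Ks = length Us \<Longrightarrow> ring.combine Rl Ks Us = (\<Sum>j<length Us. Ks ! j * Us ! j)"
proof (induction Us arbitrary: Ks)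
  case Nil
  interpret R: field Rl by (rule field_Rl)
  show ?case by (cases Ks) auto
next
  case (Cons u Us)
  interpret R: field Rl by (rule field_Rl)
  from Cons.prems obtain k Ks' where "Ks = k # Ks'" by (cases Ks) auto
  with Cons show ?case by (simp del: sum.lessThan_Suc add: sum.lessThan_Suc_shift)
qed

lemma combine_Rl_gen: "ring.combine Rl Ks Us = (\<Sum>j<min (length Ks) (length Us). Ks ! j * Us ! j)"
proof (induction Us arbitrary: Ks)
  case Nil
  interpret R: field Rl by (rule field_Rl)
  show ?case by (cases Ks) auto
next
  case (Cons u Us)
  interpret R: field Rl by (rule field_Rl)
  show ?case
  proof (cases Ks)
    case Nil then show ?thesis by simp
  next
    case (Cons k Ks')
    have "min (length Ks) (length (u # Us)) = Suc (min (length Ks') (length Us))" using Cons by simp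
    with Cons show ?thesis using Cons.IH by (simp del: sum.lessThan_Suc add: sum.lessThan_Suc_shift)
  qed
qed

lemma indep_list:
  fixes K :: "'l::field set"
  assumes K: "is_subfield K"
    and ind: "\<forall>c. (\<forall>j<N. c j \<in> K) \<longrightarrow> (\<Sum>j<N. c j * f j) = 0 \<longrightarrow> (\<forall>j<N. c j = 0)"
  shows "ring.independent Rl K (map f [0..<N])"
proof -
  interpret R: field Rl by (rule field_Rl)
  have sK: "subfield K Rl" using subfield_Rl[OF K] .
  show ?thesis
  proof (rule R.trivial_combine_imp_independent[OF sK])
    show "set (map f [0..<N]) \<subseteq> carrier Rl" by simp
  next
    fix Ks assume Ks: "set Ks \<subseteq> K" and c0: "R.combine Ks (map f [0..<N]) = \<zero>\<^bsub>Rl\<^esub>"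
    define c where "c j = (if j < length Ks then Ks ! j else 0)" for j
    have z: "0 \<in> K" using K unfolding is_subfield_def by auto
    have cK: "\<forall>j<N. c j \<in> K" using Ks z unfolding c_def by (auto simp: set_conv_nth subset_iff)
    have "(\<Sum>j<N. c j * f j) = (\<Sum>j<min (length Ks) N. Ks ! j * f j)"
    proof -
      have "(\<Sum>j<N. c j * f j) = (\<Sum>j\<in>{..<min (length Ks) N}. c j * f j)"
        by (rule sum.mono_neutral_right) (auto simp: c_def)
      also have "\<dots> = (\<Sum>j<min (length Ks) N. Ks ! j * f j)"
        by (rule sum.cong) (auto simp: c_def)
      finally show ?thesis .
    qed
    also have "\<dots> = 0" using c0 by (simp add: combine_Rl_gen)
    finally have "\<forall>j<N. c j = 0" using ind cK by blast
    then show "set (take (length (map f [0..<N])) Ks) \<subseteq> {\<zero>\<^bsub>Rl\<^esub>}"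
      by (auto simp: set_conv_nth c_def)
  qed
qed

lemma span_from_indep:
  fixes K :: "'l::field set"
  assumes K: "is_subfield K" and B: "has_K_basis K N"
    and ind: "\<forall>c. (\<forall>j<N. c j \<in> K) \<longrightarrow> (\<Sum>j<N. c j * f j) = 0 \<longrightarrow> (\<forall>j<N. c j = 0)"
  shows "\<exists>c. (\<forall>j<N. c j \<in> K) \<and> x = (\<Sum>j<N. c j * f j)"
proof -
  interpret R: field Rl by (rule field_Rl)
  have sK: "subfield K Rl" using subfield_Rl[OF K] .
  obtain e where e1: "\<forall>x. \<exists>c. (\<forall>j<N. c j \<in> K) \<and> x = (\<Sum>j<N. c j * e j)"
    and e2: "\<forall>c. (\<forall>j<N. c j \<in> K) \<longrightarrow> (\<Sum>j<N. c j * e j) = 0 \<longrightarrow> (\<forall>j<N. c j = 0)"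
    using B unfolding has_K_basis_def by blast
  have ie: "R.independent K (map e [0..<N])" using indep_list[OF K e2] .
  have se: "R.Span K (map e [0..<N]) = UNIV"
  proof -
    have "y \<in> R.Span K (map e [0..<N])" for y
    proof -
      obtain c where c: "\<forall>j<N. c j \<in> K" "y = (\<Sum>j<N. c j * e j)" using e1 by blast
      have "y = R.combine (map c [0..<N]) (map e [0..<N])"
        using c by (simp add: combine_Rl_gen)
      moreover have "set (map c [0..<N]) \<subseteq> K" using c by auto
      ultimately show ?thesis
        using R.Span_mem_iff_length_version[OF sK, of "map e [0..<N]" y]
        by (metis Rl_simps(1) length_map length_upt minus_nat.diff_0 top_greatest)
    qed
    then show ?thesis by auto
  qed
  have dim: "R.dimension N K UNIV"
    using R.dimensionI[OF sK ie se] by simp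
  have if': "R.independent K (map f [0..<N])" using indep_list[OF K ind] .
  have "R.Span K (map f [0..<N]) = UNIV"
    using R.independent_length_eq_dimension[OF sK dim if'] by simp
  then have "x \<in> R.Span K (map f [0..<N])" by simp
  then obtain Ks where Ks: "set Ks \<subseteq> K" "length Ks = N" "x = R.combine Ks (map f [0..<N])"
    using R.Span_mem_iff_length_version[OF sK, of "map f [0..<N]" x] by auto
  show ?thesis
  proof (intro exI conjI allI impI)
    fix j assume "j < N" then show "Ks ! j \<in> K" using Ks by auto
  next
    show "x = (\<Sum>j<N. Ks ! j * f j)" using Ks by (simp add: combine_Rl_gen)
  qed
qed




fun numd :: "nat \<Rightarrow> nat \<Rightarrow> (nat \<Rightarrow> nat) \<Rightarrow> nat" where
  "numd p 0 d = 0"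
| "numd p (Suc n) d = d 0 + p * numd p n (\<lambda>j. d (Suc j))"

lemma digit_lt: "0 < p \<Longrightarrow> digit p s j < p"
  by (simp add: digit_def)

lemma digit_0: "digit p s 0 = s mod p" by (simp add: digit_def)

lemma digit_Suc: "digit p s (Suc j) = digit p (s div p) j"
  by (simp add: digit_def div_mult2_eq mult.commute)

lemma numd_bound: "0 < p \<Longrightarrow> (\<forall>j<n. d j < p) \<Longrightarrow> numd p n d < p ^ n"
proof (induction n arbitrary: d)
  case 0 then show ?case by simp
next
  case (Suc n)
  have "numd p n (\<lambda>j. d (Suc j)) < p ^ n" using Suc by auto
  then have a: "numd p n (\<lambda>j. d (Suc j)) + 1 \<le> p ^ n" by simp
  have "d 0 < p" using Suc by auto
  then have "d 0 + p * numd p n (\<lambda>j. d (Suc j)) < p + p * numd p n (\<lambda>j. d (Suc j))" by simp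
  also have "\<dots> = p * (numd p n (\<lambda>j. d (Suc j)) + 1)" by simp
  also have "\<dots> \<le> p * p ^ n" using a by (intro mult_left_mono) auto
  finally show ?case by simp
qed

lemma digit_numd: "1 < p \<Longrightarrow> (\<forall>j<n. d j < p) \<Longrightarrow> j < n \<Longrightarrow> digit p (numd p n d) j = d j"
proof (induction n arbitrary: d j)
  case 0 then show ?case by simp
next
  case (Suc n)
  show ?case
  proof (cases j)
    case 0
    have "d 0 < p" using Suc by auto
    then show ?thesis using 0 by (simp add: digit_0)
  next
    case (Suc j')
    have "d 0 < p" using Suc.prems by auto
    then have "(d 0 + p * numd p n (\<lambda>j. d (Suc j))) div p = numd p n (\<lambda>j. d (Suc j))"
      using Suc.prems(1) by simp
    moreover have "digit p (numd p n (\<lambda>j. d (Suc j))) j' = d (Suc j')"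
      using Suc.prems Suc by (intro Suc.IH) auto
    ultimately show ?thesis using Suc by (simp add: digit_Suc)
  qed
qed

lemma numd_digit: "0 < p \<Longrightarrow> s < p ^ n \<Longrightarrow> numd p n (digit p s) = s"
proof (induction n arbitrary: s)
  case 0 then show ?case by simp
next
  case (Suc n)
  have "s div p < p ^ n" using Suc.prems by (simp add: div_less_iff_less_mult mult.commute)
  then have "numd p n (digit p (s div p)) = s div p" using Suc by auto
  moreover have "(\<lambda>j. digit p s (Suc j)) = digit p (s div p)" by (simp add: digit_Suc)
  ultimately show ?case by (simp add: digit_0)
qed

lemma numd_cong: "(\<forall>j<n. d j = d' j) \<Longrightarrow> numd p n d = numd p n d'"
proof (induction n arbitrary: d d')
  case 0 then show ?case by simp
next
  case (Suc n)
  then show ?case by (simp add: Suc.IH[of "\<lambda>j. d (Suc j)" "\<lambda>j. d' (Suc j)"])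
qed

lemma digit_eq_imp_eq: "0 < p \<Longrightarrow> s < p ^ n \<Longrightarrow> s' < p ^ n \<Longrightarrow> (\<forall>j<n. digit p s j = digit p s' j) \<Longrightarrow> s = s'"
  using numd_digit numd_cong by metis

lemma numd_top: "numd p n (\<lambda>_. p - 1) = p ^ n - 1"
proof (induction n)
  case 0 then show ?case by simp
next
  case (Suc n)
  have "p - 1 + p * (p ^ n - 1) = p * p ^ n - 1"
  proof (cases "p = 0")
    case True then show ?thesis by simp
  next
    case False
    then have a: "1 \<le> p ^ n" by simp
    then have "p \<le> p * p ^ n" using False by simp
    moreover have "p * (p ^ n - 1) = p * p ^ n - p" by (simp add: right_diff_distrib')
    ultimately show ?thesis using False by linarith
  qed
  then show ?case using Suc by simp
qed




lemma reindex_1n: "(\<Sum>i\<in>{1..(n::nat)}. g (n - i) i) = (\<Sum>j<n. g j (n - j))"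
proof (rule sum.reindex_bij_witness[of _ "\<lambda>j. n - j" "\<lambda>i. n - i"])
  fix a assume "a \<in> {1..n}" then show "n - (n - a) = a" "n - a \<in> {..<n}" "g (n - a) (n - (n - a)) = g (n - a) a" by auto
next
  fix b assume "b \<in> {..<n}" then show "n - (n - b) = b" "n - b \<in> {1..n}" by auto
qed

lemma inj_aux:
  fixes p :: nat and c :: "nat \<Rightarrow> int"
  assumes pr: "prime p"
  shows "(\<forall>j<n. d j < p) \<Longrightarrow> (\<forall>j<n. d' j < p) \<Longrightarrow> (\<forall>j<n. \<not> int p dvd c j) \<Longrightarrow>
    int p ^ n dvd (\<Sum>j<n. (int (d j) - int (d' j)) * int p ^ j * c j) \<Longrightarrow> \<forall>j<n. d j = d' j"
proof (induction n arbitrary: d d' c)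
  case 0 then show ?case by simp
next
  case (Suc n)
  define Y where "Y = (\<Sum>j<n. (int (d (Suc j)) - int (d' (Suc j))) * int p ^ j * c (Suc j))"
  have S: "(\<Sum>j<Suc n. (int (d j) - int (d' j)) * int p ^ j * c j) = (int (d 0) - int (d' 0)) * c 0 + int p * Y"
    unfolding Y_def by (simp del: sum.lessThan_Suc add: sum.lessThan_Suc_shift sum_distrib_left algebra_simps)
  have pp: "prime (int p)" using pr by simp
  have "int p dvd int p ^ Suc n" by simp
  moreover have "int p ^ Suc n dvd (int (d 0) - int (d' 0)) * c 0 + int p * Y" using Suc.prems(4) S by simp
  ultimately have "int p dvd (int (d 0) - int (d' 0)) * c 0 + int p * Y" by (rule dvd_trans)
  then have "int p dvd (int (d 0) - int (d' 0)) * c 0" by (simp add: dvd_add_left_iff)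
  then have "int p dvd (int (d 0) - int (d' 0))" using Suc.prems(3) pp prime_dvd_mult_iff by blast
  moreover have "\<bar>int (d 0) - int (d' 0)\<bar> < int p"
  proof -
    have "d 0 < p" "d' 0 < p" using Suc.prems(1,2) by auto
    then show ?thesis by linarith
  qed
  ultimately have "int (d 0) - int (d' 0) = 0"
    using dvd_imp_le_int[of "int (d 0) - int (d' 0)" "int p"] by force
  then have d0: "d 0 = d' 0" by simp
  have "int p * int p ^ n dvd int p * Y" using Suc.prems(4) S d0 by simp
  then have "int p ^ n dvd Y" using pr by (simp add: prime_gt_0_nat)
  moreover have "\<forall>j<n. d (Suc j) < p" "\<forall>j<n. d' (Suc j) < p" "\<forall>j<n. \<not> int p dvd c (Suc j)"
    using Suc.prems(1-3) by auto
  ultimately have "\<forall>j<n. d (Suc j) = d' (Suc j)"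
    using Suc.IH[of "\<lambda>j. d (Suc j)" "\<lambda>j. d' (Suc j)" "\<lambda>j. c (Suc j)"] unfolding Y_def by blast
  then show ?case using d0 by (metis less_Suc_eq_0_disj)
qed

lemma bfun_diff: "bfun p n b s - bfun p n b s' =
   (\<Sum>j<n. (int (digit p s j) - int (digit p s' j)) * int p ^ j * b (n - j))"
proof -
  have "bfun p n b s - bfun p n b s' =
     (\<Sum>i\<in>{1..n}. (int (digit p s (n - i)) - int (digit p s' (n - i))) * int p ^ (n - i) * b i)"
    unfolding bfun_def by (simp add: sum_subtractf[symmetric] algebra_simps)
  also have "\<dots> = (\<Sum>j<n. (int (digit p s j) - int (digit p s' j)) * int p ^ j * b (n - j))"
    by (rule reindex_1n[where g = "\<lambda>j i. (int (digit p s j) - int (digit p s' j)) * int p ^ j * b i"])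
  finally show ?thesis .
qed

lemma bfun_inj:
  assumes pr: "prime p" and sh: "\<forall>i\<in>{1..n}. \<not> int p dvd b i"
    and s: "s < p ^ n" and s': "s' < p ^ n"
    and eq: "bfun p n b s mod int (p ^ n) = bfun p n b s' mod int (p ^ n)"
  shows "s = s'"
proof -
  have p0: "0 < p" using pr prime_gt_0_nat by blast
  have "int (p ^ n) dvd bfun p n b s - bfun p n b s'" using eq by (simp add: mod_eq_dvd_iff)
  then have dv: "int p ^ n dvd (\<Sum>j<n. (int (digit p s j) - int (digit p s' j)) * int p ^ j * b (n - j))"
    by (simp add: bfun_diff)
  have "\<forall>j<n. digit p s j = digit p s' j"
    by (rule inj_aux[OF pr _ _ _ dv]) (use p0 sh digit_lt in auto)
  then show ?thesis using digit_eq_imp_eq[OF p0 s s'] by blast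
qed

lemma afun_ex1:
  assumes pr: "prime p" and sh: "\<forall>i\<in>{1..n}. \<not> int p dvd b i"
  shows "\<exists>!s. s < p ^ n \<and> bfun p n b s mod int (p ^ n) = (- t) mod int (p ^ n)"
proof -
  define f where "f s = bfun p n b s mod int (p ^ n)" for s
  have p0: "0 < p" using pr prime_gt_0_nat by blast
  have inj: "inj_on f {..<p ^ n}"
    unfolding inj_on_def f_def using bfun_inj[OF pr sh] by auto
  have sub: "f ` {..<p ^ n} \<subseteq> {0..<int (p ^ n)}"
    unfolding f_def using p0 by auto
  have "card (f ` {..<p ^ n}) = card {0..<int (p ^ n)}"
    using card_image[OF inj] by (simp del: of_nat_power)
  then have im: "f ` {..<p ^ n} = {0..<int (p ^ n)}"
    using sub by (intro card_subset_eq) auto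
  have "(- t) mod int (p ^ n) \<in> {0..<int (p ^ n)}" using p0 by auto
  then obtain s where "s < p ^ n" "f s = (- t) mod int (p ^ n)"
    using im by (metis imageE lessThan_iff)
  then show ?thesis unfolding f_def using bfun_inj[OF pr sh] by metis
qed

lemma afun_spec:
  assumes pr: "prime p" and sh: "\<forall>i\<in>{1..n}. \<not> int p dvd b i"
  shows "afun p n b t < p ^ n \<and> bfun p n b (afun p n b t) mod int (p ^ n) = (- t) mod int (p ^ n)"
  unfolding afun_def by (rule theI'[OF afun_ex1[OF pr sh]])

lemma afun_unique:
  assumes pr: "prime p" and sh: "\<forall>i\<in>{1..n}. \<not> int p dvd b i"
    and "s < p ^ n" "bfun p n b s mod int (p ^ n) = (- t) mod int (p ^ n)"
  shows "afun p n b t = s"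
  using afun_spec[OF pr sh, of t] afun_ex1[OF pr sh, of t] assms(3,4) by blast




lemma bfun_numd:
  assumes "1 < p" "\<forall>j<n. d j < p"
  shows "bfun p n b (numd p n d) = (\<Sum>i\<in>{1..n}. int (d (n - i)) * int (p ^ (n - i)) * b i)"
  unfolding bfun_def
  by (rule sum.cong) (use assms digit_numd in auto)

lemma mod_digit:
  assumes p1: "1 < p" and s: "s < p ^ n" and i0: "i0 \<in> {1..n}" and m: "m < p"
  defines "s' \<equiv> numd p n ((digit p s)(n - i0 := m))"
  shows "s' < p ^ n"
    and "\<forall>j<n. digit p s' j = (if j = n - i0 then m else digit p s j)"
    and "bfun p n b s' = bfun p n b s + (int m - int (digit p s (n - i0))) * int (p ^ (n - i0)) * b i0"
proof -
  have dl: "\<forall>j<n. ((digit p s)(n - i0 := m)) j < p" using m digit_lt p1 by auto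
  show "s' < p ^ n" unfolding s'_def using numd_bound dl p1 by auto
  show "\<forall>j<n. digit p s' j = (if j = n - i0 then m else digit p s j)"
  proof (intro allI impI)
    fix j assume "j < n"
    then show "digit p s' j = (if j = n - i0 then m else digit p s j)"
      unfolding s'_def using digit_numd[OF p1, of n "(digit p s)(n - i0 := m)" j] dl \<open>j < n\<close> by simp
  qed
  have b1: "bfun p n b s' = (\<Sum>i\<in>{1..n}. int (((digit p s)(n - i0 := m)) (n - i)) * int (p ^ (n - i)) * b i)"
    unfolding s'_def by (rule bfun_numd[OF p1, of n "(digit p s)(n - i0 := m)"]) (use dl in simp)
  have fin: "finite {1..n}" by simp
  have eqo: "\<And>i. i \<in> {1..n} - {i0} \<Longrightarrow> n - i \<noteq> n - i0" using i0 by auto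
  have "bfun p n b s' = int m * int (p ^ (n - i0)) * b i0 +
      (\<Sum>i\<in>{1..n} - {i0}. int (digit p s (n - i)) * int (p ^ (n - i)) * b i)"
    unfolding b1 sum.remove[OF fin i0]
    by (simp, rule sum.cong) (use eqo in auto)
  moreover have "bfun p n b s = int (digit p s (n - i0)) * int (p ^ (n - i0)) * b i0 +
      (\<Sum>i\<in>{1..n} - {i0}. int (digit p s (n - i)) * int (p ^ (n - i)) * b i)"
    unfolding bfun_def using sum.remove[OF fin i0] by simp
  ultimately show "bfun p n b s' = bfun p n b s + (int m - int (digit p s (n - i0))) * int (p ^ (n - i0)) * b i0"
    by (simp add: algebra_simps)
qed

lemma top_digits:
  assumes p1: "1 < p"
  shows "\<forall>j<n. digit p (p ^ n - 1) j = p - 1"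
  using digit_numd[OF p1, of n "\<lambda>_. p - 1"] numd_top[of p n] p1 by auto

lemma complement:
  assumes p1: "1 < p" and s: "s < p ^ n"
  defines "sc \<equiv> numd p n (\<lambda>j. p - 1 - digit p s j)"
  shows "sc < p ^ n"
    and "\<forall>j<n. digit p sc j = p - 1 - digit p s j"
    and "bfun p n b sc = bfun p n b (p ^ n - 1) - bfun p n b s"
proof -
  have dl: "\<forall>j<n. p - 1 - digit p s j < p" using p1 by auto
  show "sc < p ^ n" unfolding sc_def using numd_bound dl p1 by auto
  show dsc: "\<forall>j<n. digit p sc j = p - 1 - digit p s j"
    unfolding sc_def using digit_numd[OF p1 dl] by auto
  have "bfun p n b sc + bfun p n b s = bfun p n b (p ^ n - 1)"
    unfolding bfun_def sum.distrib[symmetric]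
  proof (rule sum.cong[OF refl])
    fix i assume i: "i \<in> {1..n}"
    then have "n - i < n" by auto
    then have "digit p sc (n - i) = p - 1 - digit p s (n - i)" "digit p (p ^ n - 1) (n - i) = p - 1"
      "digit p s (n - i) < p"
      using dsc top_digits[OF p1] digit_lt p1 by auto
    then show "int (digit p sc (n - i)) * int (p ^ (n - i)) * b i + int (digit p s (n - i)) * int (p ^ (n - i)) * b i =
      int (digit p (p ^ n - 1) (n - i)) * int (p ^ (n - i)) * b i"
      by (simp add: of_nat_diff algebra_simps)
  qed
  then show "bfun p n b sc = bfun p n b (p ^ n - 1) - bfun p n b s" by simp
qed

lemma afun_mod:
  assumes pr: "prime p" and sh: "\<forall>i\<in>{1..n}. \<not> int p dvd b i"
    and "t1 mod int (p ^ n) = t2 mod int (p ^ n)"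
  shows "afun p n b t1 = afun p n b t2"
proof -
  have "(- t1) mod int (p ^ n) = (- t2) mod int (p ^ n)"
    using assms(3) by (metis mod_minus_eq)
  then show ?thesis using afun_spec[OF pr sh, of t2] afun_unique[OF pr sh, of "afun p n b t2" t1] by simp
qed

lemma afun_dec:
  assumes pr: "prime p" and sh: "\<forall>i\<in>{1..n}. \<not> int p dvd b i"
    and i: "i \<in> {1..n}" and d: "1 \<le> digit p (afun p n b t) (n - i)"
  shows "\<forall>j<n. digit p (afun p n b (t + int (p ^ (n - i)) * b i)) j =
     (if j = n - i then digit p (afun p n b t) (n - i) - 1 else digit p (afun p n b t) j)"
proof -
  have p1: "1 < p" using pr prime_gt_1_nat by blast
  let ?a = "afun p n b t"
  let ?m = "digit p ?a (n - i) - 1"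
  have as: "?a < p ^ n" "bfun p n b ?a mod int (p ^ n) = (- t) mod int (p ^ n)" using afun_spec[OF pr sh] by auto
  have m: "?m < p" using digit_lt[of p] p1 by (simp add: less_imp_diff_less)
  define s' where "s' = numd p n ((digit p ?a)(n - i := ?m))"
  note md = mod_digit(1,2)[OF p1 as(1) i m, folded s'_def] mod_digit(3)[OF p1 as(1) i m, of b, folded s'_def]
  have e1: "int ?m - int (digit p ?a (n - i)) = -1" using d by simp
  have "bfun p n b s' = bfun p n b ?a - int (p ^ (n - i)) * b i"
    using md(3) unfolding e1 by simp
  moreover have "(bfun p n b ?a - int (p ^ (n - i)) * b i) mod int (p ^ n) = (- t - int (p ^ (n - i)) * b i) mod int (p ^ n)"
    by (rule mod_diff_cong[OF as(2) refl])
  ultimately have "bfun p n b s' mod int (p ^ n) = (- (t + int (p ^ (n - i)) * b i)) mod int (p ^ n)"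
    by simp
  then have "afun p n b (t + int (p ^ (n - i)) * b i) = s'"
    using afun_unique[OF pr sh md(1)] by simp
  then show ?thesis using md(2) by simp
qed

lemma afun_compl:
  assumes pr: "prime p" and sh: "\<forall>i\<in>{1..n}. \<not> int p dvd b i"
    and r: "afun p n b r = p ^ n - 1"
  shows "\<forall>j<n. digit p (afun p n b (r - t)) j = p - 1 - digit p (afun p n b t) j"
proof -
  have p1: "1 < p" using pr prime_gt_1_nat by blast
  let ?a = "afun p n b t"
  have as: "?a < p ^ n" "bfun p n b ?a mod int (p ^ n) = (- t) mod int (p ^ n)" using afun_spec[OF pr sh] by auto
  have ar: "bfun p n b (p ^ n - 1) mod int (p ^ n) = (- r) mod int (p ^ n)" using afun_spec[OF pr sh, of r] r by simp
  define sc where "sc = numd p n (\<lambda>j. p - 1 - digit p ?a j)"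
  note co = complement(1,2)[OF p1 as(1), folded sc_def] complement(3)[OF p1 as(1), of b, folded sc_def]
  have "bfun p n b sc mod int (p ^ n) = (- r - (- t)) mod int (p ^ n)"
    unfolding co(3) by (rule mod_diff_cong[OF ar as(2)])
  then have "afun p n b (r - t) = sc"
    using afun_unique[OF pr sh co(1)] by simp
  then show ?thesis using co(2) by simp
qed




locale vfield =
  fixes v :: "'l::field \<Rightarrow> int" and K :: "'l set" and p n :: nat
  assumes field: "totally_ramified_local v K p n"
begin

lemma nv: "normalized_valuation v" using field unfolding totally_ramified_local_def by auto
lemma Ksub: "is_subfield K" using field unfolding totally_ramified_local_def by auto
lemma pr: "prime p" using field unfolding totally_ramified_local_def by auto
lemma vK: "v ` (K - {0}) = {int (p ^ n) * m | m. True}" using field unfolding totally_ramified_local_def by auto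
lemma basis: "has_K_basis K (p ^ n)" using field unfolding totally_ramified_local_def by auto
lemma p1: "1 < p" using pr prime_gt_1_nat by blast
lemma N0: "0 < p ^ n" using p1 by simp

lemma K0: "0 \<in> K" and K1: "1 \<in> K" and Kadd: "x \<in> K \<Longrightarrow> y \<in> K \<Longrightarrow> x + y \<in> K"
  and Kmult: "x \<in> K \<Longrightarrow> y \<in> K \<Longrightarrow> x * y \<in> K" and Kneg: "x \<in> K \<Longrightarrow> - x \<in> K"
  and Kinv: "x \<in> K \<Longrightarrow> inverse x \<in> K"
proof -
  have a: "0 \<in> K" "1 \<in> K" "\<forall>x\<in>K. \<forall>y\<in>K. x + y \<in> K \<and> x * y \<in> K"
    "\<forall>x\<in>K. - x \<in> K \<and> (x \<noteq> 0 \<longrightarrow> inverse x \<in> K)"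
    using Ksub unfolding is_subfield_def by auto
  then show "0 \<in> K" "1 \<in> K" "x \<in> K \<Longrightarrow> y \<in> K \<Longrightarrow> x + y \<in> K"
    "x \<in> K \<Longrightarrow> y \<in> K \<Longrightarrow> x * y \<in> K" "x \<in> K \<Longrightarrow> - x \<in> K" by auto
  show "x \<in> K \<Longrightarrow> inverse x \<in> K" using a by (cases "x = 0") auto
qed

lemma v_mult: "x \<noteq> 0 \<Longrightarrow> y \<noteq> 0 \<Longrightarrow> v (x * y) = v x + v y"
  using nv unfolding normalized_valuation_def by auto

lemma v_ultra: "x \<noteq> 0 \<Longrightarrow> y \<noteq> 0 \<Longrightarrow> x + y \<noteq> 0 \<Longrightarrow> min (v x) (v y) \<le> v (x + y)"
  using nv unfolding normalized_valuation_def by auto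

lemma v_surj: "\<exists>x. x \<noteq> 0 \<and> v x = m"
  using nv unfolding normalized_valuation_def by auto

lemma v_one: "v 1 = 0"
  using v_mult[of 1 1] by simp

lemma v_inverse: "x \<noteq> 0 \<Longrightarrow> v (inverse x) = - v x"
  using v_mult[of x "inverse x"] v_one by simp

lemma v_minus_one: "v (- 1) = 0"
  using v_mult[of "-1" "-1"] v_one by simp

lemma v_neg: "x \<noteq> 0 \<Longrightarrow> v (- x) = v x"
  using v_mult[of "-1" x] v_minus_one by simp

lemma vge_zero[simp]: "vge v 0 m" by (simp add: vge_def)

lemma vge_mono: "vge v x m \<Longrightarrow> m' \<le> m \<Longrightarrow> vge v x m'"
  by (auto simp: vge_def)

lemma vge_add: "vge v x m \<Longrightarrow> vge v y m \<Longrightarrow> vge v (x + y) m"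
  unfolding vge_def using v_ultra[of x y] by fastforce

lemma vge_neg: "vge v x m \<Longrightarrow> vge v (- x) m"
  unfolding vge_def using v_neg by (cases "x = 0") auto

lemma vge_sum: "finite S \<Longrightarrow> (\<forall>j\<in>S. vge v (f j) m) \<Longrightarrow> vge v (sum f S) m"
  by (induction S rule: finite_induct) (auto intro: vge_add)

lemma vge_mult: "vge v x m \<Longrightarrow> y \<noteq> 0 \<Longrightarrow> vge v (y * x) (v y + m)"
  unfolding vge_def using v_mult by (cases "x = 0") auto

lemma vge_self: "vge v x (v x)" by (simp add: vge_def)

lemma strict:
  assumes x: "x \<noteq> 0" and y: "vge v y (v x + 1)"
  shows "x + y \<noteq> 0 \<and> v (x + y) = v x"
proof (cases "y = 0")
  case True then show ?thesis using x by simp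
next
  case False
  then have vy: "v x + 1 \<le> v y" using y by (simp add: vge_def)
  have ne: "x + y \<noteq> 0"
  proof
    assume "x + y = 0" then have "y = - x" by (simp add: add_eq_0_iff2 add.commute)
    then show False using vy v_neg[OF x] by simp
  qed
  have a: "v x \<le> v (x + y)" using v_ultra[OF x False ne] vy by simp
  have "x = (x + y) + (- y)" by simp
  then have "min (v (x + y)) (v (- y)) \<le> v x" using v_ultra[OF ne, of "- y"] False x by (metis neg_equal_0_iff_equal)
  then have "v (x + y) \<le> v x" using vy v_neg[OF False] by simp
  then show ?thesis using a ne by simp
qed

lemma sum_min:
  assumes S: "finite S" and j0: "j0 \<in> S" "z j0 \<noteq> 0"
    and others: "\<forall>j\<in>S - {j0}. vge v (z j) (v (z j0) + 1)"
  shows "sum z S \<noteq> 0 \<and> v (sum z S) = v (z j0)"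
proof -
  have "sum z S = z j0 + sum z (S - {j0})" using sum.remove[OF S j0(1)] .
  moreover have "vge v (sum z (S - {j0})) (v (z j0) + 1)" using vge_sum others S by blast
  ultimately show ?thesis using strict[OF j0(2)] by simp
qed

lemma min_term:
  assumes S: "finite S" and nz: "\<exists>j\<in>S. z j \<noteq> 0"
    and dist: "\<forall>j\<in>S. \<forall>j'\<in>S. z j \<noteq> 0 \<longrightarrow> z j' \<noteq> 0 \<longrightarrow> v (z j) = v (z j') \<longrightarrow> j = j'"
  shows "\<exists>j0\<in>S. z j0 \<noteq> 0 \<and> (\<forall>j\<in>S - {j0}. vge v (z j) (v (z j0) + 1))"
proof -
  define T where "T = {j\<in>S. z j \<noteq> 0}"
  have fT: "finite T" "T \<noteq> {}" using S nz unfolding T_def by auto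
  define m where "m = Min ((\<lambda>j. v (z j)) ` T)"
  have "m \<in> (\<lambda>j. v (z j)) ` T" unfolding m_def using fT by simp
  then obtain j0 where j0: "j0 \<in> T" "v (z j0) = m" by auto
  have le: "\<And>j. j \<in> T \<Longrightarrow> m \<le> v (z j)" unfolding m_def using fT by simp
  show ?thesis
  proof (intro bexI conjI ballI)
    show "j0 \<in> S" "z j0 \<noteq> 0" using j0 unfolding T_def by auto
    fix j assume j: "j \<in> S - {j0}"
    show "vge v (z j) (v (z j0) + 1)"
    proof (cases "z j = 0")
      case True then show ?thesis by simp
    next
      case False
      then have "j \<in> T" using j unfolding T_def by auto
      then have "m \<le> v (z j)" using le by simp
      moreover have "v (z j) \<noteq> v (z j0)" using dist j j0 False unfolding T_def by auto
      ultimately show ?thesis using j0 by (simp add: vge_def)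
    qed
  qed
qed

lemma vK_dvd: "k \<in> K \<Longrightarrow> k \<noteq> 0 \<Longrightarrow> int (p ^ n) dvd v k"
  using vK by (auto simp: image_iff set_eq_iff) (metis (mono_tags, lifting) DiffI dvd_triv_left empty_iff insert_iff)

lemma exists_unif: "\<exists>\<pi>\<in>K. \<pi> \<noteq> 0 \<and> v \<pi> = int (p ^ n)"
proof -
  have "int (p ^ n) \<in> v ` (K - {0})" using vK by auto
  then show ?thesis by auto
qed

lemma dist_terms:
  assumes fnz: "\<forall>j<p ^ n. f j \<noteq> 0"
    and dist: "\<forall>j<p ^ n. \<forall>j'<p ^ n. v (f j) mod int (p ^ n) = v (f j') mod int (p ^ n) \<longrightarrow> j = j'"
    and cK: "\<forall>j<p ^ n. c j \<in> K"
  shows "\<forall>j\<in>{..<p ^ n}. \<forall>j'\<in>{..<p ^ n}. c j * f j \<noteq> 0 \<longrightarrow> c j' * f j' \<noteq> 0 \<longrightarrow>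
      v (c j * f j) = v (c j' * f j') \<longrightarrow> j = j'"
proof (intro ballI impI)
  fix j j' assume j: "j \<in> {..<p ^ n}" "j' \<in> {..<p ^ n}" and nz: "c j * f j \<noteq> 0" "c j' * f j' \<noteq> 0"
    and eq: "v (c j * f j) = v (c j' * f j')"
  have c: "c j \<noteq> 0" "c j' \<noteq> 0" using nz by auto
  have "v (c j) + v (f j) = v (c j') + v (f j')" using eq v_mult c fnz j by auto
  moreover have "int (p ^ n) dvd v (c j)" "int (p ^ n) dvd v (c j')" using vK_dvd cK c j by auto
  moreover have "v (f j) - v (f j') = v (c j') - v (c j)" using calculation(1) by simp
  ultimately have "int (p ^ n) dvd v (f j) - v (f j')"
    by (simp add: dvd_diff)
  then have "v (f j) mod int (p ^ n) = v (f j') mod int (p ^ n)" by (simp add: mod_eq_dvd_iff)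
  then show "j = j'" using dist j by auto
qed

lemma expand:
  assumes fnz: "\<forall>j<p ^ n. f j \<noteq> 0"
    and dist: "\<forall>j<p ^ n. \<forall>j'<p ^ n. v (f j) mod int (p ^ n) = v (f j') mod int (p ^ n) \<longrightarrow> j = j'"
    and x: "x \<noteq> 0"
  shows "\<exists>c. (\<forall>j<p ^ n. c j \<in> K) \<and> x = (\<Sum>j<p ^ n. c j * f j) \<and>
     (\<exists>j0<p ^ n. c j0 \<noteq> 0 \<and> v (c j0 * f j0) = v x \<and> (\<forall>j\<in>{..<p ^ n} - {j0}. vge v (c j * f j) (v x + 1)))"
proof -
  have ind: "\<forall>c. (\<forall>j<p ^ n. c j \<in> K) \<longrightarrow> (\<Sum>j<p ^ n. c j * f j) = 0 \<longrightarrow> (\<forall>j<p ^ n. c j = 0)"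
  proof (intro allI impI)
    fix c j assume cK: "\<forall>j<p ^ n. c j \<in> K" and s0: "(\<Sum>j<p ^ n. c j * f j) = 0" and j: "j < p ^ n"
    show "c j = 0"
    proof (rule ccontr)
      assume "c j \<noteq> 0"
      then have "\<exists>j\<in>{..<p ^ n}. c j * f j \<noteq> 0" using fnz j by auto
      then obtain j0 where "j0 \<in> {..<p ^ n}" "c j0 * f j0 \<noteq> 0"
        "\<forall>j\<in>{..<p ^ n} - {j0}. vge v (c j * f j) (v (c j0 * f j0) + 1)"
        using min_term[OF _ _ dist_terms[OF fnz dist cK]] by blast
      then show False using sum_min[of "{..<p ^ n}" j0 "\<lambda>j. c j * f j"] s0 by auto
    qed
  qed
  obtain c where cK: "\<forall>j<p ^ n. c j \<in> K" and xs: "x = (\<Sum>j<p ^ n. c j * f j)"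
    using span_from_indep[OF Ksub basis ind] by blast
  have "\<exists>j\<in>{..<p ^ n}. c j * f j \<noteq> 0" using x xs by (metis (no_types, lifting) sum.neutral)
  then obtain j0 where j0: "j0 \<in> {..<p ^ n}" "c j0 * f j0 \<noteq> 0"
    "\<forall>j\<in>{..<p ^ n} - {j0}. vge v (c j * f j) (v (c j0 * f j0) + 1)"
    using min_term[OF _ _ dist_terms[OF fnz dist cK]] by blast
  have "v x = v (c j0 * f j0)" using sum_min[of "{..<p ^ n}" j0 "\<lambda>j. c j * f j"] j0 xs by simp
  then show ?thesis using cK xs j0 by (intro exI[of _ c]) auto
qed

lemma leading:
  assumes lam: "lambda_family v K p n lam" and y: "y \<noteq> 0"
  shows "\<exists>u\<in>K. u \<noteq> 0 \<and> v u = 0 \<and> vge v (y - u * lam (v y)) (v y + 1)"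
proof -
  define f where "f j = lam (v y + int j)" for j
  have l: "\<forall>t. lam t \<noteq> 0 \<and> v (lam t) = t" using lam unfolding lambda_family_def by auto
  have fnz: "\<forall>j<p ^ n. f j \<noteq> 0" using l unfolding f_def by auto
  have dist: "\<forall>j<p ^ n. \<forall>j'<p ^ n. v (f j) mod int (p ^ n) = v (f j') mod int (p ^ n) \<longrightarrow> j = j'"
  proof (intro allI impI)
    fix j j' assume j: "j < p ^ n" "j' < p ^ n" and m: "v (f j) mod int (p ^ n) = v (f j') mod int (p ^ n)"
    then have "(v y + int j) mod int (p ^ n) = (v y + int j') mod int (p ^ n)" using l unfolding f_def by simp
    then have "int (p ^ n) dvd (v y + int j) - (v y + int j')" by (simp only: mod_eq_dvd_iff)
    then have d: "int (p ^ n) dvd int j - int j'" by simp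
    show "j = j'"
    proof (rule ccontr)
      assume "j \<noteq> j'"
      then have "int j - int j' \<noteq> 0" by simp
      then have "\<bar>int (p ^ n)\<bar> \<le> \<bar>int j - int j'\<bar>" using dvd_imp_le_int d by blast
      then show False using j by linarith
    qed
  qed
  obtain c j0 where cK: "\<forall>j<p ^ n. c j \<in> K" and xs: "y = (\<Sum>j<p ^ n. c j * f j)"
    and j0: "j0 < p ^ n" "c j0 \<noteq> 0" "v (c j0 * f j0) = v y" "\<forall>j\<in>{..<p ^ n} - {j0}. vge v (c j * f j) (v y + 1)"
    using expand[OF fnz dist y] by blast
  have "v (c j0 * f j0) = v (c j0) + v (f j0)" using j0(2) fnz j0(1) by (simp add: v_mult)
  moreover have "v (f j0) = v y + int j0" using l unfolding f_def by simp
  ultimately have "v (c j0) + v y + int j0 = v y" using j0(3) by simp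
  then have vc: "v (c j0) = - int j0" by simp
  have "int (p ^ n) dvd v (c j0)" using vK_dvd cK j0 by auto
  then have "int (p ^ n) dvd int j0" using vc by simp
  then have "j0 = 0"
  proof -
    assume d: "int (p ^ n) dvd int j0"
    show "j0 = 0"
    proof (rule ccontr)
      assume "j0 \<noteq> 0"
      then have "int j0 \<noteq> 0" by simp
      then have "\<bar>int (p ^ n)\<bar> \<le> \<bar>int j0\<bar>" using dvd_imp_le_int d by blast
      then show False using j0(1) by linarith
    qed
  qed
  have f0: "f 0 = lam (v y)" unfolding f_def by simp
  have "y - c 0 * lam (v y) = (\<Sum>j\<in>{..<p ^ n} - {0}. c j * f j)"
  proof -
    have "(\<Sum>j<p ^ n. c j * f j) = c 0 * f 0 + (\<Sum>j\<in>{..<p ^ n} - {0}. c j * f j)"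
      using sum.remove[of "{..<p ^ n}" 0 "\<lambda>j. c j * f j"] N0 by simp
    then have "y = c 0 * f 0 + (\<Sum>j\<in>{..<p ^ n} - {0}. c j * f j)"
      using xs by simp
    then show ?thesis unfolding f0 by (metis add_diff_cancel_left')
  qed
  moreover have "vge v (\<Sum>j\<in>{..<p ^ n} - {0}. c j * f j) (v y + 1)"
    by (rule vge_sum) (use j0(4) \<open>j0 = 0\<close> in auto)
  moreover have "c 0 \<in> K" using cK N0 by simp
  moreover have "c 0 \<noteq> 0" "v (c 0) = 0" using j0(2) vc \<open>j0 = 0\<close> by auto
  ultimately show ?thesis by auto
qed

end




lemma count_list_replicate: "count_list (replicate m a) x = (if a = x then m else 0)"
  by (induction m) auto

lemma count_list_concat: "count_list (concat xss) x = sum_list (map (\<lambda>xs. count_list xs x) xss)"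
  by (induction xss) auto

locale sset = vfield v K p n
  for v :: "'l::field \<Rightarrow> int" and K p n +
  fixes \<iota> :: "'l \<Rightarrow> 'a::ring_1" and act :: "'a \<Rightarrow> 'l \<Rightarrow> 'l"
    and b :: "nat \<Rightarrow> int" and \<Psi> :: "nat \<Rightarrow> 'a"
  assumes alg: "K_algebra_acting K \<iota> act (p ^ n)"
    and shifts: "\<forall>i\<in>{1..n}. \<not> int p dvd b i"
begin

lemma act_add_left: "act (a + c) z = act a z + act c z"
  using alg unfolding K_algebra_acting_def by auto
lemma act_add_right: "act a (z + w) = act a z + act a w"
  using alg unfolding K_algebra_acting_def by auto
lemma act_mult: "act (a * c) z = act a (act c z)"
  using alg unfolding K_algebra_acting_def by auto
lemma act_one: "act 1 z = z"
  using alg unfolding K_algebra_acting_def by auto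
lemma act_smult: "k \<in> K \<Longrightarrow> act a (k * z) = k * act a z"
  using alg unfolding K_algebra_acting_def by auto
lemma act_zero_right: "act a 0 = 0"
  using act_add_right[of a 0 0] by (metis add.right_neutral add_left_cancel)
lemma act_zero_left: "act 0 z = 0"
  using act_add_left[of 0 0 z] by (metis add.right_neutral add_left_cancel)

lemma act_sum: "act a (sum f S) = (\<Sum>j\<in>S. act a (f j))"
proof (cases "finite S")
  case True then show ?thesis by (induction S rule: finite_induct) (auto simp: act_zero_right act_add_right)
next
  case False then show ?thesis by (simp add: act_zero_right)
qed

lemma act_lin: "\<forall>j\<in>S. c j \<in> K \<Longrightarrow> act a (\<Sum>j\<in>S. c j * f j) = (\<Sum>j\<in>S. c j * act a (f j))"
  unfolding act_sum by (rule sum.cong) (auto simp: act_smult)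

lemma act_power_Suc: "act (x ^ Suc m) z = act (x ^ m) (act x z)"
  by (simp only: power_Suc2 act_mult)

definition Wr :: "nat \<Rightarrow> nat \<Rightarrow> nat list" where
  "Wr i s = concat (map (\<lambda>i'. replicate (digit p s (n - i')) i') (filter (\<lambda>i'. i' \<noteq> i) [1..<n+1]))"

definition Wi :: "nat \<Rightarrow> nat \<Rightarrow> nat list" where
  "Wi i s = replicate (digit p s (n - i)) i @ Wr i s"

lemma count_Wr: "count_list (Wr i s) x = (if x \<in> {1..n} \<and> x \<noteq> i then digit p s (n - x) else 0)"
proof -
  have "count_list (Wr i s) x = sum_list (map (\<lambda>i'. if i' = x then digit p s (n - i') else 0) (filter (\<lambda>i'. i' \<noteq> i) [1..<n+1]))"
    unfolding Wr_def count_list_concat by (simp add: comp_def count_list_replicate)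
  also have "\<dots> = (\<Sum>i'\<in>set (filter (\<lambda>i'. i' \<noteq> i) [1..<n+1]). if i' = x then digit p s (n - i') else 0)"
    by (rule sum_list_distinct_conv_sum_set) simp
  also have "set (filter (\<lambda>i'. i' \<noteq> i) [1..<n+1]) = {1..n} - {i}" by auto
  finally show ?thesis by (simp add: sum.delta)
qed

lemma set_Wr: "set (Wr i s) \<subseteq> {1..n}"
  unfolding Wr_def by auto

lemma count_Wi: "x \<in> {1..n} \<Longrightarrow> i \<in> {1..n} \<Longrightarrow> count_list (Wi i s) x = digit p s (n - x)"
  unfolding Wi_def by (simp add: count_list_replicate count_Wr)

lemma set_Wi: "i \<in> {1..n} \<Longrightarrow> set (Wi i s) \<subseteq> {1..n}"
  unfolding Wi_def using set_Wr by auto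

lemma prod_Wi: "prod_list (map \<Psi> (Wi i s)) = \<Psi> i ^ digit p s (n - i) * prod_list (map \<Psi> (Wr i s))"
  unfolding Wi_def by (simp add: prod_list_replicate)

lemma in_Ups: "set w \<subseteq> {1..n} \<Longrightarrow> (\<forall>i\<in>{1..n}. count_list w i = digit p s (n - i)) \<Longrightarrow>
   prod_list (map \<Psi> w) \<in> Upsilon p n \<Psi> s"
  unfolding Upsilon_def by blast

lemma C2_word:
  assumes C2: "C2 v p n b act \<Psi> \<rho>" and s: "s < p ^ n" and w: "set w \<subseteq> {1..n}"
    and c: "\<forall>i\<in>{1..n}. count_list w i = digit p s (n - i)"
  shows "act (prod_list (map \<Psi> w)) \<rho> \<noteq> 0 \<and> v (act (prod_list (map \<Psi> w)) \<rho>) = v \<rho> + bfun p n b s"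
  using C2 in_Ups[OF w c] s unfolding C2_def by blast

end




context sset
begin

lemma term_step1:
  assumes C2: "C2 v p n b act \<Psi> \<rho>" and i: "i \<in> {1..n}" and s: "s < p ^ n"
    and d: "digit p s (n - i) < p - 1"
  shows "act (\<Psi> i) (act (prod_list (map \<Psi> (Wi i s))) \<rho>) \<noteq> 0 \<and>
    v (act (\<Psi> i) (act (prod_list (map \<Psi> (Wi i s))) \<rho>)) = v \<rho> + bfun p n b s + int (p ^ (n - i)) * b i"
proof -
  let ?d = "digit p s (n - i)"
  have m: "?d + 1 < p" using d by simp
  define s' where "s' = numd p n ((digit p s)(n - i := ?d + 1))"
  note md = mod_digit(1,2)[OF p1 s i m, folded s'_def] mod_digit(3)[OF p1 s i m, of b, folded s'_def]
  have eq: "act (\<Psi> i) (act (prod_list (map \<Psi> (Wi i s))) \<rho>) = act (prod_list (map \<Psi> (i # Wi i s))) \<rho>"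
    by (simp add: act_mult)
  have w: "set (i # Wi i s) \<subseteq> {1..n}" using set_Wi[OF i] i by auto
  have c: "\<forall>x\<in>{1..n}. count_list (i # Wi i s) x = digit p s' (n - x)"
  proof
    fix x assume x: "x \<in> {1..n}"
    have "n - x < n" using x by auto
    then have "digit p s' (n - x) = (if n - x = n - i then ?d + 1 else digit p s (n - x))" using md(2) by simp
    moreover have "(n - x = n - i) = (x = i)" using x i by auto
    ultimately show "count_list (i # Wi i s) x = digit p s' (n - x)" using count_Wi[OF x i] by auto
  qed
  have "bfun p n b s' = bfun p n b s + int (p ^ (n - i)) * b i" using md(3) by simp
  then show ?thesis using C2_word[OF C2 md(1) w c] eq by simp
qed

lemma term_step2:
  assumes C2: "C2 v p n b act \<Psi> \<rho>" and C3: "C3 v p n b act \<Psi>" and i: "i \<in> {1..n}" and s: "s < p ^ n"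
    and d: "digit p s (n - i) = p - 1"
  shows "vge v (act (\<Psi> i) (act (prod_list (map \<Psi> (Wi i s))) \<rho>)) (v \<rho> + bfun p n b s + int (p ^ (n - i)) * b i + 1)"
proof -
  let ?d = "digit p s (n - i)"
  have m: "0 < p" using p1 by simp
  define s' where "s' = numd p n ((digit p s)(n - i := 0))"
  note md = mod_digit(1,2)[OF p1 s i m, folded s'_def] mod_digit(3)[OF p1 s i m, of b, folded s'_def]
  let ?P = "prod_list (map \<Psi> (Wr i s))"
  have "\<Psi> i * prod_list (map \<Psi> (Wi i s)) = \<Psi> i * (\<Psi> i ^ (p - 1) * ?P)" using prod_Wi d by simp
  also have "\<dots> = \<Psi> i ^ p * ?P" using p1 by (simp add: mult.assoc[symmetric] power_Suc[symmetric])
  finally have eq: "act (\<Psi> i) (act (prod_list (map \<Psi> (Wi i s))) \<rho>) = act (\<Psi> i ^ p) (act ?P \<rho>)"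
    by (simp add: act_mult[symmetric])
  have c: "\<forall>x\<in>{1..n}. count_list (Wr i s) x = digit p s' (n - x)"
  proof
    fix x assume x: "x \<in> {1..n}"
    have "n - x < n" using x by auto
    then have "digit p s' (n - x) = (if n - x = n - i then 0 else digit p s (n - x))" using md(2) by simp
    moreover have "(n - x = n - i) = (x = i)" using x i by auto
    ultimately show "count_list (Wr i s) x = digit p s' (n - x)" using count_Wr x by auto
  qed
  have g: "act ?P \<rho> \<noteq> 0" "v (act ?P \<rho>) = v \<rho> + bfun p n b s'" using C2_word[OF C2 md(1) set_Wr c] by auto
  have c3: "vge v (act (\<Psi> i ^ p) (act ?P \<rho>)) (v (act ?P \<rho>) + b i * int (p ^ (n - i + 1)) + 1)"
    using C3 i g(1) unfolding C3_def by blast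
  have "int (p ^ (n - i + 1)) = int p * int (p ^ (n - i))" by simp
  moreover have "int (p - 1) = int p - 1" using p1 by simp
  ultimately have "v (act ?P \<rho>) + b i * int (p ^ (n - i + 1)) = v \<rho> + bfun p n b s + int (p ^ (n - i)) * b i"
    using g(2) md(3) d by (simp add: algebra_simps)
  then show ?thesis using c3 eq by simp
qed

lemma term_vge:
  assumes C2: "C2 v p n b act \<Psi> \<rho>" and C3: "C3 v p n b act \<Psi>" and i: "i \<in> {1..n}" and s: "s < p ^ n"
  shows "vge v (act (\<Psi> i) (act (prod_list (map \<Psi> (Wi i s))) \<rho>)) (v \<rho> + bfun p n b s + int (p ^ (n - i)) * b i)"
proof (cases "digit p s (n - i) < p - 1")
  case True then show ?thesis using term_step1[OF C2 i s] by (simp add: vge_def)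
next
  case False
  moreover have "digit p s (n - i) < p" using digit_lt[of p s] p1 by simp
  ultimately have "digit p s (n - i) = p - 1" by linarith
  then show ?thesis using term_step2[OF C2 C3 i s] vge_mono by fastforce
qed

lemma psi_lead:
  assumes C2: "C2 v p n b act \<Psi> \<rho>" and C3: "C3 v p n b act \<Psi>" and i: "i \<in> {1..n}" and x: "x \<noteq> 0"
  shows "(digit p (afun p n b (v \<rho> - v x)) (n - i) < p - 1 \<longrightarrow>
           act (\<Psi> i) x \<noteq> 0 \<and> v (act (\<Psi> i) x) = v x + int (p ^ (n - i)) * b i) \<and>
         (digit p (afun p n b (v \<rho> - v x)) (n - i) = p - 1 \<longrightarrow>
           vge v (act (\<Psi> i) x) (v x + int (p ^ (n - i)) * b i + 1))"
proof -
  define f where "f s = act (prod_list (map \<Psi> (Wi i s))) \<rho>" for s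
  define g where "g s = act (\<Psi> i) (f s)" for s
  let ?sh = "int (p ^ (n - i)) * b i"
  have cnt: "\<forall>x\<in>{1..n}. count_list (Wi i s) x = digit p s (n - x)" for s using count_Wi i by auto
  have fv: "f s \<noteq> 0 \<and> v (f s) = v \<rho> + bfun p n b s" if "s < p ^ n" for s
    unfolding f_def using C2_word[OF C2 that set_Wi[OF i] cnt] .
  have fnz: "\<forall>j<p ^ n. f j \<noteq> 0" using fv by auto
  have dist: "\<forall>j<p ^ n. \<forall>j'<p ^ n. v (f j) mod int (p ^ n) = v (f j') mod int (p ^ n) \<longrightarrow> j = j'"
  proof (intro allI impI)
    fix j j' assume j: "j < p ^ n" "j' < p ^ n" and m: "v (f j) mod int (p ^ n) = v (f j') mod int (p ^ n)"
    then have "int (p ^ n) dvd v (f j) - v (f j')" by (simp only: mod_eq_dvd_iff)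
    then have "int (p ^ n) dvd bfun p n b j - bfun p n b j'" using fv j by simp
    then have "bfun p n b j mod int (p ^ n) = bfun p n b j' mod int (p ^ n)" by (simp only: mod_eq_dvd_iff)
    then show "j = j'" using bfun_inj[OF pr shifts j] by blast
  qed
  obtain c s0 where cK: "\<forall>j<p ^ n. c j \<in> K" and xs: "x = (\<Sum>j<p ^ n. c j * f j)"
    and s0: "s0 < p ^ n" "c s0 \<noteq> 0" "v (c s0 * f s0) = v x" "\<forall>j\<in>{..<p ^ n} - {s0}. vge v (c j * f j) (v x + 1)"
    using expand[OF fnz dist x] by blast
  have vcs0: "v (c s0 * f s0) = v (c s0) + v \<rho> + bfun p n b s0" using v_mult s0 fv by simp
  have "int (p ^ n) dvd v (c s0)" using vK_dvd cK s0 by auto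
  moreover have "v (c s0) = - (bfun p n b s0 - (- (v \<rho> - v x)))" using vcs0 s0(3) by simp
  ultimately have "int (p ^ n) dvd bfun p n b s0 - (- (v \<rho> - v x))" by (metis dvd_minus_iff)
  then have "bfun p n b s0 mod int (p ^ n) = (- (v \<rho> - v x)) mod int (p ^ n)" by (simp only: mod_eq_dvd_iff)
  then have as0: "afun p n b (v \<rho> - v x) = s0" using afun_unique[OF pr shifts s0(1)] by blast
  have ax: "act (\<Psi> i) x = (\<Sum>j<p ^ n. c j * g j)" unfolding xs g_def by (rule act_lin) (use cK in simp)
  have others: "\<forall>j\<in>{..<p ^ n} - {s0}. vge v (c j * g j) (v x + ?sh + 1)"
  proof
    fix j assume j: "j \<in> {..<p ^ n} - {s0}"
    show "vge v (c j * g j) (v x + ?sh + 1)"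
    proof (cases "c j = 0")
      case True then show ?thesis by simp
    next
      case False
      have "v x + 1 \<le> v (c j * f j)" using s0(4) j False fnz by (auto simp: vge_def)
      then have le: "v x + 1 \<le> v (c j) + v \<rho> + bfun p n b j" using v_mult False fv j by auto
      have "vge v (g j) (v \<rho> + bfun p n b j + ?sh)" unfolding g_def f_def using term_vge[OF C2 C3 i] j by auto
      then have "vge v (c j * g j) (v (c j) + (v \<rho> + bfun p n b j + ?sh))" using vge_mult False by blast
      then show ?thesis by (rule vge_mono) (use le in simp)
    qed
  qed
  show ?thesis
  proof (rule conjI; rule impI)
    assume d: "digit p (afun p n b (v \<rho> - v x)) (n - i) < p - 1"
    have "g s0 \<noteq> 0 \<and> v (g s0) = v \<rho> + bfun p n b s0 + ?sh"
      unfolding g_def f_def using term_step1[OF C2 i s0(1)] d as0 by simp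
    then have t0: "c s0 * g s0 \<noteq> 0" "v (c s0 * g s0) = v x + ?sh" using s0 vcs0 v_mult by auto
    then have "(\<Sum>j<p ^ n. c j * g j) \<noteq> 0 \<and> v (\<Sum>j<p ^ n. c j * g j) = v x + ?sh"
      using sum_min[of "{..<p ^ n}" s0 "\<lambda>j. c j * g j"] others s0(1) by simp
    then show "act (\<Psi> i) x \<noteq> 0 \<and> v (act (\<Psi> i) x) = v x + ?sh" using ax by simp
  next
    assume d: "digit p (afun p n b (v \<rho> - v x)) (n - i) = p - 1"
    have "vge v (g s0) (v \<rho> + bfun p n b s0 + ?sh + 1)"
      unfolding g_def f_def using term_step2[OF C2 C3 i s0(1)] d as0 by simp
    then have "vge v (c s0 * g s0) (v (c s0) + (v \<rho> + bfun p n b s0 + ?sh + 1))" using vge_mult s0 by blast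
    then have t0: "vge v (c s0 * g s0) (v x + ?sh + 1)" using vcs0 s0(3) by (simp add: algebra_simps)
    have "vge v (\<Sum>j<p ^ n. c j * g j) (v x + ?sh + 1)"
    proof (rule vge_sum)
      show "\<forall>j\<in>{..<p ^ n}. vge v (c j * g j) (v x + ?sh + 1)" using t0 others by blast
    qed simp
    then show "vge v (act (\<Psi> i) x) (v x + ?sh + 1)" using ax by simp
  qed
qed

lemma afun_rho:
  assumes C1: "C1 n act \<Psi>" and C2: "C2 v p n b act \<Psi> \<rho>" and C3: "C3 v p n b act \<Psi>"
  shows "afun p n b (v \<rho>) = p ^ n - 1"
proof -
  have dg: "digit p (afun p n b (v \<rho>)) j = p - 1" if j: "j < n" for j
  proof -
    define i where "i = n - j"
    have i: "i \<in> {1..n}" "n - i = j" using j unfolding i_def by auto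
    have z: "act (\<Psi> i) 1 = 0" using C1 i unfolding C1_def by auto
    have l: "digit p (afun p n b (v \<rho> - v 1)) (n - i) < p - 1 \<longrightarrow> act (\<Psi> i) 1 \<noteq> 0"
      using psi_lead[OF C2 C3 i(1), of 1] by simp
    have "\<not> digit p (afun p n b (v \<rho>)) j < p - 1" using l z i v_one by simp
    moreover have "digit p (afun p n b (v \<rho>)) j < p" using digit_lt p1 by simp
    ultimately show ?thesis by linarith
  qed
  have N1: "p ^ n - 1 < p ^ n" using N0 by simp
  show ?thesis
    using digit_eq_imp_eq[of p "afun p n b (v \<rho>)" n "p ^ n - 1"] afun_spec[OF pr shifts] N1 p1 dg top_digits[OF p1]
    by simp
qed

lemma part1:
  assumes lam: "lambda_family v K p n lam" and C1: "C1 n act \<Psi>" and C3: "C3 v p n b act \<Psi>"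
    and \<rho>: "\<rho> \<noteq> 0" and C2: "C2 v p n b act \<Psi> \<rho>"
  shows "scaffold v K act p n b \<Psi> lam 1 \<and> afun p n b (v \<rho>) = p ^ n - 1"
proof -
  have ar: "afun p n b (v \<rho>) = p ^ n - 1" by (rule afun_rho[OF C1 C2 C3])
  have l: "\<forall>t. lam t \<noteq> 0 \<and> v (lam t) = t" using lam unfolding lambda_family_def by auto
  have main: "(if 1 \<le> digit p (afun p n b t) (n - i)
         then (\<exists>u\<in>K. u \<noteq> 0 \<and> v u = 0 \<and> cong_tol v (act (\<Psi> i) (lam t)) (u * lam (t + int (p ^ (n - i)) * b i)) (t + int (p ^ (n - i)) * b i) 1)
         else cong_tol v (act (\<Psi> i) (lam t)) 0 (t + int (p ^ (n - i)) * b i) 1)"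
    if i: "i \<in> {1..n}" for i t
  proof -
    let ?s = "t + int (p ^ (n - i)) * b i"
    let ?d = "digit p (afun p n b t) (n - i)"
    have ni: "n - i < n" using i by auto
    have co: "digit p (afun p n b (v \<rho> - t)) (n - i) = p - 1 - ?d"
      using afun_compl[OF pr shifts ar] ni by simp
    show ?thesis
    proof (cases "1 \<le> ?d")
      case True
      then have "digit p (afun p n b (v \<rho> - v (lam t))) (n - i) < p - 1"
        using co l digit_lt[of p] p1 by (simp add: less_diff_conv2)
      then have y: "act (\<Psi> i) (lam t) \<noteq> 0" "v (act (\<Psi> i) (lam t)) = ?s"
        using psi_lead[OF C2 C3 i, of "lam t"] l by auto
      obtain u where u: "u \<in> K" "u \<noteq> 0" "v u = 0" "vge v (act (\<Psi> i) (lam t) - u * lam ?s) (?s + 1)"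
        using leading[OF lam y(1)] y(2) by auto
      then show ?thesis using True by (auto simp: cong_tol_def one_enat_def)
    next
      case False
      then have "digit p (afun p n b (v \<rho> - v (lam t))) (n - i) = p - 1"
        using co l by simp
      then have "vge v (act (\<Psi> i) (lam t)) (?s + 1)"
        using psi_lead[OF C2 C3 i, of "lam t"] l by auto
      then show ?thesis using False by (simp add: cong_tol_def one_enat_def)
    qed
  qed
  have m2: "\<forall>i\<in>{1..n}. \<forall>t. (let s = t + int (p ^ (n - i)) * b i in
        (if 1 \<le> digit p (afun p n b t) (n - i)
         then (\<exists>u\<in>K. u \<noteq> 0 \<and> v u = 0 \<and> cong_tol v (act (\<Psi> i) (lam t)) (u * lam s) s 1)
         else cong_tol v (act (\<Psi> i) (lam t)) 0 s 1))"
    unfolding Let_def using main by blast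
  have c1: "\<forall>i\<in>{1..n}. act (\<Psi> i) 1 = 0" using C1 unfolding C1_def .
  have "scaffold v K act p n b \<Psi> lam 1"
    unfolding scaffold_def by (intro conjI order.refl lam c1 m2)
  then show ?thesis using ar by simp
qed

end




context sset
begin

lemma cong_tol_vge:
  assumes "1 \<le> T" "cong_tol v x y s T"
  shows "vge v (x - y) (s + 1)"
proof (cases T)
  case (enat m)
  then have "1 \<le> m" using assms(1) by (simp add: one_enat_def)
  moreover have "vge v (x - y) (s + int m)" using assms(2) enat by (simp add: cong_tol_def)
  ultimately show ?thesis by (rule_tac vge_mono) auto
next
  case infinity
  then show ?thesis using assms(2) by (simp add: cong_tol_def)
qed

lemma sc_single:
  assumes sc: "scaffold v K act p n b \<Psi> lam T" and i: "i \<in> {1..n}"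
  shows "(1 \<le> digit p (afun p n b t) (n - i) \<longrightarrow>
           act (\<Psi> i) (lam t) \<noteq> 0 \<and> v (act (\<Psi> i) (lam t)) = t + int (p ^ (n - i)) * b i) \<and>
         (digit p (afun p n b t) (n - i) = 0 \<longrightarrow>
           vge v (act (\<Psi> i) (lam t)) (t + int (p ^ (n - i)) * b i + 1))"
proof -
  let ?s = "t + int (p ^ (n - i)) * b i"
  have T: "1 \<le> T" and lam: "lambda_family v K p n lam" using sc unfolding scaffold_def by auto
  have l: "\<forall>t. lam t \<noteq> 0 \<and> v (lam t) = t" using lam unfolding lambda_family_def by auto
  have m: "if 1 \<le> digit p (afun p n b t) (n - i)
         then (\<exists>u\<in>K. u \<noteq> 0 \<and> v u = 0 \<and> cong_tol v (act (\<Psi> i) (lam t)) (u * lam ?s) ?s T)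
         else cong_tol v (act (\<Psi> i) (lam t)) 0 ?s T"
    using sc i unfolding scaffold_def Let_def by blast
  show ?thesis
  proof (rule conjI; rule impI)
    assume d: "1 \<le> digit p (afun p n b t) (n - i)"
    then obtain u where u: "u \<in> K" "u \<noteq> 0" "v u = 0" "cong_tol v (act (\<Psi> i) (lam t)) (u * lam ?s) ?s T"
      using m by auto
    have e: "vge v (act (\<Psi> i) (lam t) - u * lam ?s) (?s + 1)" using cong_tol_vge[OF T u(4)] .
    have ul: "u * lam ?s \<noteq> 0" "v (u * lam ?s) = ?s" using u l v_mult by auto
    have "act (\<Psi> i) (lam t) = u * lam ?s + (act (\<Psi> i) (lam t) - u * lam ?s)" by simp
    then show "act (\<Psi> i) (lam t) \<noteq> 0 \<and> v (act (\<Psi> i) (lam t)) = ?s"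
      using strict[OF ul(1)] e ul(2) by metis
  next
    assume d: "digit p (afun p n b t) (n - i) = 0"
    then have "cong_tol v (act (\<Psi> i) (lam t)) 0 ?s T" using m by simp
    then show "vge v (act (\<Psi> i) (lam t)) (?s + 1)" using cong_tol_vge[OF T] by fastforce
  qed
qed

lemma lam_dist:
  assumes lam: "lambda_family v K p n lam"
  shows "\<forall>j<p ^ n. lam (a + int j) \<noteq> 0"
    and "\<forall>j<p ^ n. \<forall>j'<p ^ n. v (lam (a + int j)) mod int (p ^ n) = v (lam (a + int j')) mod int (p ^ n) \<longrightarrow> j = j'"
proof -
  have l: "\<forall>t. lam t \<noteq> 0 \<and> v (lam t) = t" using lam unfolding lambda_family_def by auto
  show "\<forall>j<p ^ n. lam (a + int j) \<noteq> 0" using l by auto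
  show "\<forall>j<p ^ n. \<forall>j'<p ^ n. v (lam (a + int j)) mod int (p ^ n) = v (lam (a + int j')) mod int (p ^ n) \<longrightarrow> j = j'"
  proof (intro allI impI)
    fix j j' assume j: "j < p ^ n" "j' < p ^ n" and m: "v (lam (a + int j)) mod int (p ^ n) = v (lam (a + int j')) mod int (p ^ n)"
    then have "(a + int j) mod int (p ^ n) = (a + int j') mod int (p ^ n)" using l by simp
    then have "int (p ^ n) dvd (a + int j) - (a + int j')" by (simp only: mod_eq_dvd_iff)
    then have d: "int (p ^ n) dvd int j - int j'" by simp
    show "j = j'"
    proof (rule ccontr)
      assume "j \<noteq> j'"
      then have "int j - int j' \<noteq> 0" by simp
      then have "\<bar>int (p ^ n)\<bar> \<le> \<bar>int j - int j'\<bar>" using dvd_imp_le_int d by blast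
      then show False using j by linarith
    qed
  qed
qed

lemma scaf1:
  assumes sc: "scaffold v K act p n b \<Psi> lam T" and i: "i \<in> {1..n}" and x: "x \<noteq> 0"
  shows "vge v (act (\<Psi> i) x) (v x + int (p ^ (n - i)) * b i)"
proof -
  let ?sh = "int (p ^ (n - i)) * b i"
  have lam: "lambda_family v K p n lam" using sc unfolding scaffold_def by auto
  have l: "\<forall>t. lam t \<noteq> 0 \<and> v (lam t) = t" using lam unfolding lambda_family_def by auto
  define f where "f j = lam (v x + int j)" for j
  obtain c j0 where cK: "\<forall>j<p ^ n. c j \<in> K" and xs: "x = (\<Sum>j<p ^ n. c j * f j)"
    and j0: "j0 < p ^ n" "c j0 \<noteq> 0" "v (c j0 * f j0) = v x" "\<forall>j\<in>{..<p ^ n} - {j0}. vge v (c j * f j) (v x + 1)"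
    using expand[OF lam_dist[OF lam, of "v x"] x, folded f_def] by blast
  have ax: "act (\<Psi> i) x = (\<Sum>j<p ^ n. c j * act (\<Psi> i) (f j))"
    by (subst xs, rule act_lin) (use cK in simp)
  have "vge v (\<Sum>j<p ^ n. c j * act (\<Psi> i) (f j)) (v x + ?sh)"
  proof (rule vge_sum, simp, rule ballI)
    fix j assume j: "j \<in> {..<p ^ n}"
    show "vge v (c j * act (\<Psi> i) (f j)) (v x + ?sh)"
    proof (cases "c j = 0")
      case True then show ?thesis by simp
    next
      case False
      have vf: "v (c j * f j) = v (c j) + (v x + int j)" using v_mult False l unfolding f_def by simp
      have "vge v (c j * f j) (v x)"
      proof (cases "j = j0")
        case True then show ?thesis using j0(3) vge_self[of "c j0 * f j0"] by simp
      next
        case False then show ?thesis using j0(4) j by (auto intro: vge_mono)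
      qed
      then have le: "v x \<le> v (c j) + (v x + int j)" using vf False l unfolding f_def vge_def by auto
      have "vge v (act (\<Psi> i) (f j)) (v x + int j + ?sh)"
        using sc_single[OF sc i, of "v x + int j"] unfolding f_def
        by (cases "digit p (afun p n b (v x + int j)) (n - i) = 0") (auto simp: vge_def intro: vge_mono)
      then have "vge v (c j * act (\<Psi> i) (f j)) (v (c j) + (v x + int j + ?sh))" using vge_mult False by blast
      then show ?thesis by (rule vge_mono) (use le in simp)
    qed
  qed
  then show ?thesis using ax by simp
qed

lemma scaf2:
  assumes sc: "scaffold v K act p n b \<Psi> lam T" and i: "i \<in> {1..n}" and x: "x \<noteq> 0"
  shows "(1 \<le> digit p (afun p n b (v x)) (n - i) \<longrightarrow>
           act (\<Psi> i) x \<noteq> 0 \<and> v (act (\<Psi> i) x) = v x + int (p ^ (n - i)) * b i) \<and>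
         (digit p (afun p n b (v x)) (n - i) = 0 \<longrightarrow>
           vge v (act (\<Psi> i) x) (v x + int (p ^ (n - i)) * b i + 1))"
proof -
  let ?sh = "int (p ^ (n - i)) * b i"
  have lam: "lambda_family v K p n lam" using sc unfolding scaffold_def by auto
  obtain u where u: "u \<in> K" "u \<noteq> 0" "v u = 0" "vge v (x - u * lam (v x)) (v x + 1)"
    using leading[OF lam x] by blast
  define e where "e = x - u * lam (v x)"
  have ax: "act (\<Psi> i) x = u * act (\<Psi> i) (lam (v x)) + act (\<Psi> i) e"
  proof -
    have "x = u * lam (v x) + e" unfolding e_def by simp
    then have "act (\<Psi> i) x = act (\<Psi> i) (u * lam (v x)) + act (\<Psi> i) e" by (metis act_add_right)
    then show ?thesis using act_smult[OF u(1)] by simp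
  qed
  have ae: "vge v (act (\<Psi> i) e) (v x + ?sh + 1)"
  proof (cases "e = 0")
    case True then show ?thesis by (simp add: act_zero_right)
  next
    case False
    then have "v x + 1 \<le> v e" using u(4) unfolding e_def vge_def by auto
    then show ?thesis using scaf1[OF sc i False] by (rule_tac vge_mono) auto
  qed
  show ?thesis
  proof (rule conjI; rule impI)
    assume d: "1 \<le> digit p (afun p n b (v x)) (n - i)"
    then have a1: "act (\<Psi> i) (lam (v x)) \<noteq> 0" "v (act (\<Psi> i) (lam (v x))) = v x + ?sh"
      using sc_single[OF sc i, of "v x"] by auto
    then have a2: "u * act (\<Psi> i) (lam (v x)) \<noteq> 0" "v (u * act (\<Psi> i) (lam (v x))) = v x + ?sh"
      using u v_mult by auto
    show "act (\<Psi> i) x \<noteq> 0 \<and> v (act (\<Psi> i) x) = v x + ?sh"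
      using strict[OF a2(1)] a2(2) ae ax by simp
  next
    assume d: "digit p (afun p n b (v x)) (n - i) = 0"
    then have "vge v (act (\<Psi> i) (lam (v x))) (v x + ?sh + 1)"
      using sc_single[OF sc i, of "v x"] by auto
    then have "vge v (u * act (\<Psi> i) (lam (v x))) (v x + ?sh + 1)"
      using vge_mult[of _ _ u] u by fastforce
    then show "vge v (act (\<Psi> i) x) (v x + ?sh + 1)" using ae ax vge_add by simp
  qed
qed

lemma iter:
  assumes sc: "scaffold v K act p n b \<Psi> lam T" and i: "i \<in> {1..n}"
  shows "\<forall>x. x \<noteq> 0 \<longrightarrow> vge v (act (\<Psi> i ^ j) x)
     (v x + int j * (int (p ^ (n - i)) * b i) + (if digit p (afun p n b (v x)) (n - i) < j then 1 else 0))"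
proof (induction j)
  case 0 then show ?case by (simp add: act_one vge_self)
next
  case (Suc j)
  let ?sh = "int (p ^ (n - i)) * b i"
  show ?case
  proof (intro allI impI)
    fix x :: 'l assume x: "x \<noteq> 0"
    let ?y = "act (\<Psi> i) x"
    let ?d = "digit p (afun p n b (v x)) (n - i)"
    have e: "act (\<Psi> i ^ Suc j) x = act (\<Psi> i ^ j) ?y" by (rule act_power_Suc)
    show "vge v (act (\<Psi> i ^ Suc j) x) (v x + int (Suc j) * ?sh + (if ?d < Suc j then 1 else 0))"
    proof (cases "?d = 0")
      case True
      then have y: "vge v ?y (v x + ?sh + 1)" using scaf2[OF sc i x] by auto
      show ?thesis
      proof (cases "?y = 0")
        case True then show ?thesis using e by (simp add: act_zero_right)
      next
        case False
        then have "v x + ?sh + 1 \<le> v ?y" using y by (simp add: vge_def)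
        moreover have "vge v (act (\<Psi> i ^ j) ?y) (v ?y + int j * ?sh + (if digit p (afun p n b (v ?y)) (n - i) < j then 1 else 0))"
          using Suc.IH False by blast
        ultimately show ?thesis using e True
          by (rule_tac vge_mono[where m = "v ?y + int j * ?sh + (if digit p (afun p n b (v ?y)) (n - i) < j then 1 else 0)"])
             (auto simp: algebra_simps)
      qed
    next
      case False
      then have y: "?y \<noteq> 0" "v ?y = v x + ?sh" using scaf2[OF sc i x] by auto
      have dd: "digit p (afun p n b (v ?y)) (n - i) = ?d - 1"
        using afun_dec[OF pr shifts i, of "v x"] False y(2) i by auto
      have "vge v (act (\<Psi> i ^ j) ?y) (v ?y + int j * ?sh + (if digit p (afun p n b (v ?y)) (n - i) < j then 1 else 0))"
        using Suc.IH y(1) by blast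
      moreover have "(?d - 1 < j) = (?d < Suc j)" using False by auto
      ultimately show ?thesis using e y(2) dd by (simp add: algebra_simps)
    qed
  qed
qed

lemma part3_C3:
  assumes sc: "scaffold v K act p n b \<Psi> lam T"
  shows "C3 v p n b act \<Psi>"
  unfolding C3_def
proof (intro ballI allI impI)
  fix i \<alpha> assume i: "i \<in> {1..n}" and a: "(\<alpha> :: 'l) \<noteq> 0"
  have "vge v (act (\<Psi> i ^ p) \<alpha>) (v \<alpha> + int p * (int (p ^ (n - i)) * b i) + (if digit p (afun p n b (v \<alpha>)) (n - i) < p then 1 else 0))"
    using iter[OF sc i] a by blast
  moreover have "digit p (afun p n b (v \<alpha>)) (n - i) < p" using digit_lt p1 by simp
  moreover have "int p * (int (p ^ (n - i)) * b i) = b i * int (p ^ (n - i + 1))" by (simp add: algebra_simps)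
  ultimately show "vge v (act (\<Psi> i ^ p) \<alpha>) (v \<alpha> + b i * int (p ^ (n - i + 1)) + 1)"
    by (simp only: if_True)
qed

lemma word_lemma:
  assumes sc: "scaffold v K act p n b \<Psi> lam T" and x: "x \<noteq> 0"
  shows "set w \<subseteq> {1..n} \<Longrightarrow> (\<forall>i\<in>{1..n}. count_list w i \<le> digit p (afun p n b (v x)) (n - i)) \<Longrightarrow>
   act (prod_list (map \<Psi> w)) x \<noteq> 0 \<and>
   v (act (prod_list (map \<Psi> w)) x) = v x + (\<Sum>i\<in>{1..n}. int (count_list w i) * int (p ^ (n - i)) * b i) \<and>
   (\<forall>i\<in>{1..n}. digit p (afun p n b (v (act (prod_list (map \<Psi> w)) x))) (n - i) =
        digit p (afun p n b (v x)) (n - i) - count_list w i)"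
proof (induction w)
  case Nil then show ?case using x by (simp add: act_one)
next
  case (Cons a w)
  let ?D = "\<lambda>i. digit p (afun p n b (v x)) (n - i)"
  let ?y = "act (prod_list (map \<Psi> w)) x"
  have a: "a \<in> {1..n}" and sw: "set w \<subseteq> {1..n}" using Cons.prems(1) by auto
  have cw: "\<forall>i\<in>{1..n}. count_list w i \<le> ?D i"
  proof
    fix i assume "i \<in> {1..n}"
    then have "count_list (a # w) i \<le> ?D i" using Cons.prems(2) by blast
    then show "count_list w i \<le> ?D i" by (simp split: if_splits)
  qed
  note IH = Cons.IH[OF sw cw]
  have ca: "count_list w a + 1 \<le> ?D a" using Cons.prems(2) a by fastforce
  have dy: "digit p (afun p n b (v ?y)) (n - a) = ?D a - count_list w a" using IH a by blast
  then have d1: "1 \<le> digit p (afun p n b (v ?y)) (n - a)" using ca by simp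
  have z: "act (\<Psi> a) ?y \<noteq> 0" "v (act (\<Psi> a) ?y) = v ?y + int (p ^ (n - a)) * b a"
    using scaf2[OF sc a] IH d1 by auto
  have e: "act (prod_list (map \<Psi> (a # w))) x = act (\<Psi> a) ?y" by (simp add: act_mult)
  have sumeq: "(\<Sum>i\<in>{1..n}. int (count_list (a # w) i) * int (p ^ (n - i)) * b i) =
     (\<Sum>i\<in>{1..n}. int (count_list w i) * int (p ^ (n - i)) * b i) + int (p ^ (n - a)) * b a"
  proof -
    have "(\<Sum>i\<in>{1..n}. int (count_list (a # w) i) * int (p ^ (n - i)) * b i) =
       (\<Sum>i\<in>{1..n}. int (count_list w i) * int (p ^ (n - i)) * b i + (if a = i then int (p ^ (n - i)) * b i else 0))"
      by (rule sum.cong) (auto simp: algebra_simps)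
    also have "\<dots> = (\<Sum>i\<in>{1..n}. int (count_list w i) * int (p ^ (n - i)) * b i) + int (p ^ (n - a)) * b a"
      using a by (simp add: sum.distrib)
    finally show ?thesis .
  qed
  have dig: "\<forall>i\<in>{1..n}. digit p (afun p n b (v (act (\<Psi> a) ?y))) (n - i) = ?D i - count_list (a # w) i"
  proof
    fix i assume i: "i \<in> {1..n}"
    have ni: "n - i < n" using i by auto
    have "digit p (afun p n b (v (act (\<Psi> a) ?y))) (n - i) =
       (if n - i = n - a then digit p (afun p n b (v ?y)) (n - a) - 1 else digit p (afun p n b (v ?y)) (n - i))"
      using afun_dec[OF pr shifts a d1] ni z(2) by simp
    moreover have "(n - i = n - a) = (i = a)" using i a by auto
    ultimately show "digit p (afun p n b (v (act (\<Psi> a) ?y))) (n - i) = ?D i - count_list (a # w) i"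
      using IH i dy by auto
  qed
  show ?case using z IH sumeq dig unfolding e by simp
qed

lemma part3:
  assumes sc: "scaffold v K act p n b \<Psi> lam T"
  shows "C1 n act \<Psi> \<and> C3 v p n b act \<Psi> \<and>
        (\<forall>\<rho>. \<rho> \<noteq> 0 \<and> afun p n b (v \<rho>) = p ^ n - 1 \<longrightarrow> C2 v p n b act \<Psi> \<rho>)"
proof (intro conjI allI impI)
  show "C1 n act \<Psi>" using sc unfolding scaffold_def C1_def by auto
  show "C3 v p n b act \<Psi>" by (rule part3_C3[OF sc])
  fix \<rho> assume r: "\<rho> \<noteq> 0 \<and> afun p n b (v \<rho>) = p ^ n - 1"
  show "C2 v p n b act \<Psi> \<rho>"
    unfolding C2_def
  proof (intro allI impI ballI)
    fix s \<Phi> assume s: "s < p ^ n" and P: "\<Phi> \<in> Upsilon p n \<Psi> s"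
    then obtain w where w: "\<Phi> = prod_list (map \<Psi> w)" "set w \<subseteq> {1..n}"
      "\<forall>i\<in>{1..n}. count_list w i = digit p s (n - i)" unfolding Upsilon_def by blast
    have D: "\<forall>i\<in>{1..n}. digit p (afun p n b (v \<rho>)) (n - i) = p - 1"
      using r top_digits[OF p1] by auto
    have le: "\<forall>i\<in>{1..n}. count_list w i \<le> digit p (afun p n b (v \<rho>)) (n - i)"
    proof
      fix i assume i: "i \<in> {1..n}"
      have "digit p s (n - i) < p" using digit_lt[of p s] p1 by simp
      then show "count_list w i \<le> digit p (afun p n b (v \<rho>)) (n - i)" using w(3) D i by fastforce
    qed
    have "(\<Sum>i\<in>{1..n}. int (count_list w i) * int (p ^ (n - i)) * b i) = bfun p n b s"
      unfolding bfun_def using w(3) by simp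
    then show "act \<Phi> \<rho> \<noteq> 0 \<and> v (act \<Phi> \<rho>) = v \<rho> + bfun p n b s"
      using word_lemma[OF sc _ w(2) le] r w(1) by simp
  qed
qed

end




lemma prod_perm:
  fixes f :: "nat \<Rightarrow> 'a::ring_1"
  assumes comm: "\<forall>x y :: 'a. x * y = y * x"
  shows "(\<forall>x. count_list W x = count_list W' x) \<Longrightarrow> prod_list (map f W) = prod_list (map f W')"
proof (induction W arbitrary: W')
  case Nil
  then have "\<forall>x. x \<notin> set W'" using count_list_0_iff by (metis count_list.simps(1))
  then have "W' = []" by (cases W') auto
  then show ?case by simp
next
  case (Cons a W)
  have "count_list W' a \<noteq> 0" using Cons.prems[rule_format, of a] by simp
  then have "a \<in> set W'" using count_list_0_iff by metis
  then obtain A B where W': "W' = A @ a # B" by (meson split_list)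
  have "\<forall>x. count_list W x = count_list (A @ B) x"
  proof
    fix x show "count_list W x = count_list (A @ B) x"
      using Cons.prems[rule_format, of x] unfolding W' by (simp split: if_splits)
  qed
  then have "prod_list (map f W) = prod_list (map f (A @ B))" using Cons.IH by blast
  then have IH: "prod_list (map f W) = prod_list (map f A) * prod_list (map f B)" by simp
  have "prod_list (map f (a # W)) = f a * (prod_list (map f A) * prod_list (map f B))" using IH by simp
  also have "\<dots> = (f a * prod_list (map f A)) * prod_list (map f B)" by (simp only: mult.assoc)
  also have "f a * prod_list (map f A) = prod_list (map f A) * f a" using comm by blast
  also have "prod_list (map f A) * f a * prod_list (map f B) = prod_list (map f A) * (f a * prod_list (map f B))"
    by (simp only: mult.assoc)
  finally show ?case unfolding W' by simp
qed

lemma count_list_filter: "count_list (filter P xs) x = (if P x then count_list xs x else 0)"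
  by (induction xs) auto

context vfield
begin

lemma powi_props:
  assumes "\<pi> \<in> K" "\<pi> \<noteq> 0" "v \<pi> = int (p ^ n)"
  shows "\<pi> powi k \<in> K \<and> \<pi> powi k \<noteq> 0 \<and> v (\<pi> powi k) = k * int (p ^ n)"
proof -
  have pw: "x \<in> K \<Longrightarrow> x \<noteq> 0 \<Longrightarrow> x ^ m \<in> K \<and> x ^ m \<noteq> 0 \<and> v (x ^ m) = int m * v x" for x m
    by (induction m) (auto simp: K1 v_one Kmult v_mult algebra_simps)
  show ?thesis
  proof (cases "0 \<le> k")
    case True
    then show ?thesis using pw[OF assms(1,2), of "nat k"] assms(3) by (simp add: power_int_def)
  next
    case False
    have i: "inverse \<pi> \<in> K" "inverse \<pi> \<noteq> 0" "v (inverse \<pi>) = - int (p ^ n)"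
      using assms Kinv v_inverse by auto
    then show ?thesis using pw[OF i(1,2), of "nat (- k)"] False by (simp add: power_int_def)
  qed
qed

end

context sset
begin

lemma part2:
  assumes C1: "C1 n act \<Psi>" and C3: "C3 v p n b act \<Psi>" and \<rho>: "\<rho> \<noteq> 0" and C2: "C2 v p n b act \<Psi> \<rho>"
    and C4: "C4 p n \<Psi>" and comm: "\<forall>x y :: 'a. x * y = y * x"
  shows "\<exists>lam. scaffold v K act p n b \<Psi> lam \<infinity>"
proof -
  have ar: "afun p n b (v \<rho>) = p ^ n - 1" by (rule afun_rho[OF C1 C2 C3])
  obtain \<pi> where \<pi>: "\<pi> \<in> K" "\<pi> \<noteq> 0" "v \<pi> = int (p ^ n)" using exists_unif by blast
  note PP = powi_props[OF \<pi>]
  define \<sigma> where "\<sigma> t = afun p n b (v \<rho> - t)" for t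
  have \<sigma>d: "\<forall>j<n. digit p (\<sigma> t) j = p - 1 - digit p (afun p n b t) j" for t
    unfolding \<sigma>_def using afun_compl[OF pr shifts ar] by blast
  have \<sigma>s: "\<sigma> t < p ^ n" "bfun p n b (\<sigma> t) mod int (p ^ n) = (- (v \<rho> - t)) mod int (p ^ n)" for t
    unfolding \<sigma>_def using afun_spec[OF pr shifts] by auto
  define W where "W t = Wr 0 (\<sigma> t)" for t
  have cW: "count_list (W t) x = (if x \<in> {1..n} then digit p (\<sigma> t) (n - x) else 0)" for t x
    unfolding W_def count_Wr by auto
  define \<beta> where "\<beta> t = act (prod_list (map \<Psi> (W t))) \<rho>" for t
  have \<beta>v: "\<beta> t \<noteq> 0 \<and> v (\<beta> t) = v \<rho> + bfun p n b (\<sigma> t)" for t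
    unfolding \<beta>_def by (rule C2_word[OF C2 \<sigma>s(1)]) (use set_Wr cW in \<open>auto simp: W_def\<close>)
  have dv: "int (p ^ n) dvd t - v (\<beta> t)" for t
  proof -
    have "int (p ^ n) dvd bfun p n b (\<sigma> t) - (- (v \<rho> - t))" using \<sigma>s(2)[of t] by (simp only: mod_eq_dvd_iff)
    moreover have "bfun p n b (\<sigma> t) - (- (v \<rho> - t)) = - (t - v (\<beta> t))" using \<beta>v[of t] by simp
    ultimately show ?thesis by (metis dvd_minus_iff)
  qed
  define k where "k t = (t - v (\<beta> t)) div int (p ^ n)" for t
  have kN: "k t * int (p ^ n) = t - v (\<beta> t)" for t unfolding k_def using dv[of t] by simp
  define lam where "lam t = \<pi> powi (k t) * \<beta> t" for t
  have lv: "lam t \<noteq> 0 \<and> v (lam t) = t" for t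
    unfolding lam_def using PP[of "k t"] \<beta>v[of t] v_mult kN[of t] by simp
  have lamf: "lambda_family v K p n lam"
    unfolding lambda_family_def
  proof (intro conjI allI impI)
    fix t show "lam t \<noteq> 0" "v (lam t) = t" using lv by auto
  next
    fix t1 t2 assume m: "t1 mod int (p ^ n) = t2 mod int (p ^ n)"
    have "(v \<rho> - t1) mod int (p ^ n) = (v \<rho> - t2) mod int (p ^ n)" by (rule mod_diff_cong[OF refl m])
    then have "\<sigma> t1 = \<sigma> t2" unfolding \<sigma>_def by (rule afun_mod[OF pr shifts])
    then have "\<beta> t1 = \<beta> t2" unfolding \<beta>_def W_def by simp
    then have "lam t1 * inverse (lam t2) = \<pi> powi (k t1) * inverse (\<pi> powi (k t2))"
      unfolding lam_def using \<beta>v[of t2] by (simp add: field_simps)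
    then show "lam t1 * inverse (lam t2) \<in> K" using PP Kmult Kinv by simp
  qed
  have main: "(if 1 \<le> digit p (afun p n b t) (n - i)
         then (\<exists>u\<in>K. u \<noteq> 0 \<and> v u = 0 \<and> cong_tol v (act (\<Psi> i) (lam t)) (u * lam (t + int (p ^ (n - i)) * b i)) (t + int (p ^ (n - i)) * b i) \<infinity>)
         else cong_tol v (act (\<Psi> i) (lam t)) 0 (t + int (p ^ (n - i)) * b i) \<infinity>)"
    if i: "i \<in> {1..n}" for i t
  proof -
    let ?sh = "int (p ^ (n - i)) * b i"
    let ?s = "t + ?sh"
    let ?d = "digit p (afun p n b t) (n - i)"
    have ni: "n - i < n" using i by auto
    have dlt: "?d < p" using digit_lt p1 by simp
    have al: "act (\<Psi> i) (lam t) = \<pi> powi (k t) * act (\<Psi> i) (\<beta> t)"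
      unfolding lam_def using act_smult PP by blast
    have ab: "act (\<Psi> i) (\<beta> t) = act (prod_list (map \<Psi> (i # W t))) \<rho>"
      unfolding \<beta>_def by (simp add: act_mult)
    show ?thesis
    proof (cases "1 \<le> ?d")
      case True
      have dec: "\<forall>j<n. digit p (afun p n b ?s) j = (if j = n - i then ?d - 1 else digit p (afun p n b t) j)"
        using afun_dec[OF pr shifts i True] .
      have cnt: "\<forall>x. count_list (i # W t) x = count_list (W ?s) x"
      proof
        fix x
        show "count_list (i # W t) x = count_list (W ?s) x"
        proof (cases "x \<in> {1..n}")
          case False
          then have "x \<noteq> i" using i by auto
          have "count_list (W t) x = 0" "count_list (W ?s) x = 0" using False cW by auto
          then show ?thesis using \<open>x \<noteq> i\<close> by simp
        next
          case xin: True
          have nx: "n - x < n" using xin by auto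
          have eqi: "(n - x = n - i) = (x = i)" using xin i by auto
          have "digit p (\<sigma> ?s) (n - x) = p - 1 - digit p (afun p n b ?s) (n - x)" using \<sigma>d nx by blast
          moreover have "digit p (\<sigma> t) (n - x) = p - 1 - digit p (afun p n b t) (n - x)" using \<sigma>d nx by blast
          moreover have "digit p (afun p n b ?s) (n - x) = (if x = i then ?d - 1 else digit p (afun p n b t) (n - x))"
            using dec nx eqi by simp
          ultimately show ?thesis using cW xin True dlt by (auto simp: Suc_diff_Suc)
        qed
      qed
      have "prod_list (map \<Psi> (i # W t)) = prod_list (map \<Psi> (W ?s))"
        by (rule prod_perm[OF comm cnt])
      then have abs: "act (\<Psi> i) (\<beta> t) = \<beta> ?s" using ab unfolding \<beta>_def by simp
      have bd: "bfun p n b (\<sigma> ?s) - bfun p n b (\<sigma> t) = ?sh"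
      proof -
        have "bfun p n b (\<sigma> ?s) - bfun p n b (\<sigma> t) =
            (\<Sum>j<n. (int (digit p (\<sigma> ?s) j) - int (digit p (\<sigma> t) j)) * int p ^ j * b (n - j))"
          by (rule bfun_diff)
        also have "\<dots> = (\<Sum>j<n. (if j = n - i then int p ^ j * b (n - j) else 0))"
        proof (rule sum.cong[OF refl])
          fix j assume j: "j \<in> {..<n}"
          have "digit p (\<sigma> ?s) j = p - 1 - digit p (afun p n b ?s) j" "digit p (\<sigma> t) j = p - 1 - digit p (afun p n b t) j"
            using \<sigma>d j by auto
          moreover have "digit p (afun p n b t) j < p" using digit_lt p1 by simp
          ultimately show "(int (digit p (\<sigma> ?s) j) - int (digit p (\<sigma> t) j)) * int p ^ j * b (n - j) =
              (if j = n - i then int p ^ j * b (n - j) else 0)"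
            using dec j True by (auto simp: of_nat_diff)
        qed
        also have "\<dots> = int p ^ (n - i) * b (n - (n - i))" using ni by (simp add: sum.delta')
        also have "n - (n - i) = i" using i by auto
        finally show ?thesis by simp
      qed
      have "?s - v (\<beta> ?s) = t - v (\<beta> t)" using \<beta>v[of ?s] \<beta>v[of t] bd by linarith
      then have ks: "k ?s = k t" unfolding k_def by (simp only:)
      have "act (\<Psi> i) (lam t) = \<pi> powi (k t) * \<beta> ?s" using al abs by simp
      moreover have "lam ?s = \<pi> powi (k t) * \<beta> ?s" unfolding lam_def using ks by simp
      ultimately have "act (\<Psi> i) (lam t) = 1 * lam ?s" by simp
      then have "\<exists>u\<in>K. u \<noteq> 0 \<and> v u = 0 \<and> cong_tol v (act (\<Psi> i) (lam t)) (u * lam ?s) ?s \<infinity>"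
        using K1 v_one by (intro bexI[of _ 1]) (auto simp: cong_tol_def)
      then show ?thesis using True by simp
    next
      case False
      then have d0: "?d = 0" by simp
      have cnt: "\<forall>x. count_list (i # W t) x = count_list (replicate p i @ filter (\<lambda>y. y \<noteq> i) (W t)) x"
      proof
        fix x
        have "digit p (\<sigma> t) (n - i) = p - 1" using \<sigma>d ni d0 by simp
        then show "count_list (i # W t) x = count_list (replicate p i @ filter (\<lambda>y. y \<noteq> i) (W t)) x"
          using cW i p1 by (auto simp: count_list_replicate count_list_filter)
      qed
      have "prod_list (map \<Psi> (i # W t)) = prod_list (map \<Psi> (replicate p i @ filter (\<lambda>y. y \<noteq> i) (W t)))"
        by (rule prod_perm[OF comm cnt])
      also have "\<dots> = \<Psi> i ^ p * prod_list (map \<Psi> (filter (\<lambda>y. y \<noteq> i) (W t)))"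
        by (simp add: prod_list_replicate)
      also have "\<dots> = 0" using C4 i unfolding C4_def by simp
      finally have "act (\<Psi> i) (lam t) = 0" using al ab act_zero_left by simp
      then show ?thesis using False by (simp add: cong_tol_def)
    qed
  qed
  have m2: "\<forall>i\<in>{1..n}. \<forall>t. (let s = t + int (p ^ (n - i)) * b i in
        (if 1 \<le> digit p (afun p n b t) (n - i)
         then (\<exists>u\<in>K. u \<noteq> 0 \<and> v u = 0 \<and> cong_tol v (act (\<Psi> i) (lam t)) (u * lam s) s \<infinity>)
         else cong_tol v (act (\<Psi> i) (lam t)) 0 s \<infinity>))"
    unfolding Let_def using main by blast
  have c1: "\<forall>i\<in>{1..n}. act (\<Psi> i) 1 = 0" using C1 unfolding C1_def .
  have "scaffold v K act p n b \<Psi> lam \<infinity>"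
    unfolding scaffold_def by (intro conjI lamf c1 m2) simp
  then show ?thesis by blast
qed

end


theorem theoremA1:
  fixes v :: "'l::field \<Rightarrow> int" and K :: "'l set" and p n :: nat
    and \<iota> :: "'l \<Rightarrow> 'a::ring_1" and act :: "'a \<Rightarrow> 'l \<Rightarrow> 'l"
    and b :: "nat \<Rightarrow> int" and \<Psi> :: "nat \<Rightarrow> 'a"
  assumes field: "totally_ramified_local v K p n"
    and alg: "K_algebra_acting K \<iota> act (p ^ n)"
    and shifts: "\<forall>i\<in>{1..n}. \<not> int p dvd b i"
  shows
    "(\<forall>lam \<rho>. lambda_family v K p n lam \<and> C1 n act \<Psi> \<and> C3 v p n b act \<Psi> \<and>
        \<rho> \<noteq> 0 \<and> C2 v p n b act \<Psi> \<rho> \<longrightarrow>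
        scaffold v K act p n b \<Psi> lam 1 \<and> afun p n b (v \<rho>) = p ^ n - 1)
     \<and> (\<forall>\<rho>. C1 n act \<Psi> \<and> C3 v p n b act \<Psi> \<and> \<rho> \<noteq> 0 \<and> C2 v p n b act \<Psi> \<rho> \<and>
        C4 p n \<Psi> \<and> (\<forall>x y :: 'a. x * y = y * x) \<longrightarrow>
        (\<exists>lam. scaffold v K act p n b \<Psi> lam \<infinity>))
     \<and> (\<forall>lam T. scaffold v K act p n b \<Psi> lam T \<longrightarrow>
        C1 n act \<Psi> \<and> C3 v p n b act \<Psi> \<and>
        (\<forall>\<rho>. \<rho> \<noteq> 0 \<and> afun p n b (v \<rho>) = p ^ n - 1 \<longrightarrow> C2 v p n b act \<Psi> \<rho>))"
proof -
  interpret S: sset v K p n \<iota> act b \<Psi>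
    by unfold_locales (use field alg shifts in auto)
  show ?thesis
  proof (intro conjI)
    show "\<forall>lam \<rho>. lambda_family v K p n lam \<and> C1 n act \<Psi> \<and> C3 v p n b act \<Psi> \<and>
        \<rho> \<noteq> 0 \<and> C2 v p n b act \<Psi> \<rho> \<longrightarrow>
        scaffold v K act p n b \<Psi> lam 1 \<and> afun p n b (v \<rho>) = p ^ n - 1"
      using S.part1 by blast
    show "\<forall>\<rho>. C1 n act \<Psi> \<and> C3 v p n b act \<Psi> \<and> \<rho> \<noteq> 0 \<and> C2 v p n b act \<Psi> \<rho> \<and>
        C4 p n \<Psi> \<and> (\<forall>x y :: 'a. x * y = y * x) \<longrightarrow>
        (\<exists>lam. scaffold v K act p n b \<Psi> lam \<infinity>)"
      using S.part2 by blast
    show "\<forall>lam T. scaffold v K act p n b \<Psi> lam T \<longrightarrow>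
        C1 n act \<Psi> \<and> C3 v p n b act \<Psi> \<and>
        (\<forall>\<rho>. \<rho> \<noteq> 0 \<and> afun p n b (v \<rho>) = p ^ n - 1 \<longrightarrow> C2 v p n b act \<Psi> \<rho>)"
      using S.part3 by blast
  qed
qed

end
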